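(* Let $G$ be a countable directed graph, let $x\in\mathcal{V}(G)$, and assume there are exactly $n$ distinct loop edges with source $x$ (edges $e$ with $s(e)=r(e)=x$), where $n$ is a nonnegative integer. Let $e_1,\dots,e_n$ be these edges. Then the map $\phi_x:\mathfrak{M}_{G,x}\to\mathbb{C}^n$, $\phi_x(\rho)=(\rho(L_{e_1}),\dots,\rho(L_{e_n}))$, is a homeomorphism of $\mathfrak{M}_{G,x}$ (with the weak-$*$ topology) onto the closed unit ball $\mathbb{B}_n=\{\lambda\in\mathbb{C}^n:\sum_i|\lambda_i|^2\le1\}$.
   Context: A countable directed graph $G$ has countable vertex set $\mathcal{V}(G)$, edge set $\mathcal{E}(G)$, range and source maps $r,s$. The free semigroupoid $\mathbb{F}^+(G)$ consists of vertices (paths of length $0$) and finite paths $w=e_k\cdots e_1$ with $s(e_i)=r(e_{i-1})$, $s(w)=s(e_1)$, $r(w)=r(e_k)$. On $\ell^2(\mathbb{F}^+(G))$ with orthonormal basis $\{\xi_w\}$, $L_e\xi_w=\xi_{ew}$ if $s(e)=r(w)$ and $0$ otherwise, and $P_v$ is the projection onto $\overline{\operatorname{span}}\{\xi_w:r(w)=v\}$. The tensor algebra $\mathcal{T}_+(G)$ is the norm-closed operator algebra generated by all $L_e$ and $P_v$. $\mathfrak{M}_G$ denotes the set of nonzero multiplicative linear functionals (characters) on $\mathcal{T}_+(G)$ with the weak-$*$ topology, and $\mathfrak{M}_{G,x}=\{\rho\in\mathfrak{M}_G:\rho(P_x)=1\}$. *)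

theory Defs
  imports "HOL-Analysis.Analysis"
begin

text \<open>Elements of the free semigroupoid are either
  vertices (paths of length 0) or nonempty edge lists [e_k, ..., e_1]
  (written left to right as e_k ... e_1).\<close>

definition countable_digraph ::
  "'v set \<Rightarrow> 'e set \<Rightarrow> ('e \<Rightarrow> 'v) \<Rightarrow> ('e \<Rightarrow> 'v) \<Rightarrow> bool" where
  "countable_digraph V E r s \<longleftrightarrow>
     countable V \<and> countable E \<and> (\<forall>e\<in>E. r e \<in> V \<and> s e \<in> V)"

datatype ('v, 'e) gpath = Vtx 'v | Edges "'e list"

fun prange :: "('e \<Rightarrow> 'v) \<Rightarrow> ('v, 'e) gpath \<Rightarrow> 'v" where
  "prange r (Vtx v) = v"
| "prange r (Edges es) = r (hd es)"

fun psource :: "('e \<Rightarrow> 'v) \<Rightarrow> ('v, 'e) gpath \<Rightarrow> 'v" where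
  "psource s (Vtx v) = v"
| "psource s (Edges es) = s (last es)"

definition valid_path ::
  "'v set \<Rightarrow> 'e set \<Rightarrow> ('e \<Rightarrow> 'v) \<Rightarrow> ('e \<Rightarrow> 'v) \<Rightarrow> ('v, 'e) gpath \<Rightarrow> bool" where
  "valid_path V E r s w = (case w of
      Vtx v \<Rightarrow> v \<in> V
    | Edges es \<Rightarrow> es \<noteq> [] \<and> set es \<subseteq> E \<and>
                  (\<forall>i. Suc i < length es \<longrightarrow> s (es ! i) = r (es ! Suc i)))"

type_synonym ('v, 'e) vec = "('v, 'e) gpath \<Rightarrow> complex"
type_synonym ('v, 'e) op = "('v, 'e) vec \<Rightarrow> ('v, 'e) vec"

definition l2 ::
  "'v set \<Rightarrow> 'e set \<Rightarrow> ('e \<Rightarrow> 'v) \<Rightarrow> ('e \<Rightarrow> 'v) \<Rightarrow> ('v, 'e) vec set" where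
  "l2 V E r s = {f. (\<forall>u. \<not> valid_path V E r s u \<longrightarrow> f u = 0) \<and>
                     (\<lambda>u. (cmod (f u))\<^sup>2) summable_on UNIV}"

definition l2norm :: "('v, 'e) vec \<Rightarrow> real" where
  "l2norm f = sqrt (\<Sum>\<^sub>\<infinity>u. (cmod (f u))\<^sup>2)"

text \<open>Operators are represented as maps on all functions that vanish off l2.
  L_e xi_w = xi_{ew} if s(e) = r(w), else 0; P_v projects onto span{xi_w : r(w) = v}.\<close>

definition shiftL ::
  "'v set \<Rightarrow> 'e set \<Rightarrow> ('e \<Rightarrow> 'v) \<Rightarrow> ('e \<Rightarrow> 'v) \<Rightarrow> 'e \<Rightarrow> ('v, 'e) op" where
  "shiftL V E r s e f = (if f \<in> l2 V E r s then
     (\<lambda>u. if valid_path V E r s u then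
            (case u of
               Edges (e' # es) \<Rightarrow>
                 (if e' = e then f (if es = [] then Vtx (s e) else Edges es) else 0)
             | _ \<Rightarrow> 0)
          else 0)
   else (\<lambda>u. 0))"

definition projP ::
  "'v set \<Rightarrow> 'e set \<Rightarrow> ('e \<Rightarrow> 'v) \<Rightarrow> ('e \<Rightarrow> 'v) \<Rightarrow> 'v \<Rightarrow> ('v, 'e) op" where
  "projP V E r s v f = (if f \<in> l2 V E r s then
     (\<lambda>u. if valid_path V E r s u \<and> prange r u = v then f u else 0)
   else (\<lambda>u. 0))"

inductive_set tpoly ::
  "'v set \<Rightarrow> 'e set \<Rightarrow> ('e \<Rightarrow> 'v) \<Rightarrow> ('e \<Rightarrow> 'v) \<Rightarrow> ('v, 'e) op set"
  for V E r s where
  gen_L: "e \<in> E \<Longrightarrow> shiftL V E r s e \<in> tpoly V E r s"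
| gen_P: "v \<in> V \<Longrightarrow> projP V E r s v \<in> tpoly V E r s"
| add: "p \<in> tpoly V E r s \<Longrightarrow> q \<in> tpoly V E r s \<Longrightarrow> (\<lambda>f u. p f u + q f u) \<in> tpoly V E r s"
| smult: "p \<in> tpoly V E r s \<Longrightarrow> (\<lambda>f u. c * p f u) \<in> tpoly V E r s"
| mult: "p \<in> tpoly V E r s \<Longrightarrow> q \<in> tpoly V E r s \<Longrightarrow> p \<circ> q \<in> tpoly V E r s"

text \<open>The tensor algebra: norm closure of tpoly (operators vanishing off l2,
  mapping l2 into l2, approximable in operator norm by elements of tpoly).\<close>

definition tensor_alg ::
  "'v set \<Rightarrow> 'e set \<Rightarrow> ('e \<Rightarrow> 'v) \<Rightarrow> ('e \<Rightarrow> 'v) \<Rightarrow> ('v, 'e) op set" where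
  "tensor_alg V E r s = {T.
     (\<forall>f. f \<notin> l2 V E r s \<longrightarrow> T f = (\<lambda>u. 0)) \<and>
     (\<forall>f\<in>l2 V E r s. T f \<in> l2 V E r s) \<and>
     (\<forall>\<epsilon>>0. \<exists>p\<in>tpoly V E r s. \<forall>f\<in>l2 V E r s.
         l2norm (\<lambda>u. T f u - p f u) \<le> \<epsilon> * l2norm f)}"

definition characters ::
  "'v set \<Rightarrow> 'e set \<Rightarrow> ('e \<Rightarrow> 'v) \<Rightarrow> ('e \<Rightarrow> 'v) \<Rightarrow> (('v, 'e) op \<Rightarrow> complex) set" where
  "characters V E r s = (let A = tensor_alg V E r s in {\<rho>.
     \<rho> \<in> extensional A \<and>
     (\<forall>S\<in>A. \<forall>T\<in>A. \<rho> (\<lambda>f u. S f u + T f u) = \<rho> S + \<rho> T) \<and>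
     (\<forall>c. \<forall>T\<in>A. \<rho> (\<lambda>f u. c * T f u) = c * \<rho> T) \<and>
     (\<forall>S\<in>A. \<forall>T\<in>A. \<rho> (S \<circ> T) = \<rho> S * \<rho> T) \<and>
     (\<exists>T\<in>A. \<rho> T \<noteq> 0)})"

definition characters_at ::
  "'v set \<Rightarrow> 'e set \<Rightarrow> ('e \<Rightarrow> 'v) \<Rightarrow> ('e \<Rightarrow> 'v) \<Rightarrow> 'v \<Rightarrow> (('v, 'e) op \<Rightarrow> complex) set" where
  "characters_at V E r s x = {\<rho> \<in> characters V E r s. \<rho> (projP V E r s x) = 1}"

text \<open>Weak-* topology = topology of pointwise convergence on the algebra.\<close>

definition weak_star_topology ::
  "'v set \<Rightarrow> 'e set \<Rightarrow> ('e \<Rightarrow> 'v) \<Rightarrow> ('e \<Rightarrow> 'v) \<Rightarrow> 'v \<Rightarrow> (('v, 'e) op \<Rightarrow> complex) topology" where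
  "weak_star_topology V E r s x =
     subtopology (product_topology (\<lambda>_. euclidean) (tensor_alg V E r s)) (characters_at V E r s x)"

text \<open>C^n as extensional functions on {..<n} with the product (= Euclidean)
  topology, and its closed unit ball.\<close>

definition closed_unit_ball_n :: "nat \<Rightarrow> (nat \<Rightarrow> complex) set" where
  "closed_unit_ball_n n = {z \<in> PiE {..<n} (\<lambda>_. UNIV). (\<Sum>i<n. (cmod (z i))\<^sup>2) \<le> 1}"

definition ball_topology :: "nat \<Rightarrow> (nat \<Rightarrow> complex) topology" where
  "ball_topology n = subtopology (product_topology (\<lambda>_. euclidean) {..<n}) (closed_unit_ball_n n)"

end

theory Submission
  imports Defs
begin


definition sqs :: "('a \<Rightarrow> complex) \<Rightarrow> bool" where
  "sqs f \<longleftrightarrow> (\<lambda>u. (cmod (f u))\<^sup>2) summable_on UNIV"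

lemma l2norm_nonneg: "l2norm f \<ge> 0"
  unfolding l2norm_def by (simp add: infsum_nonneg)

lemma finite_le_nsq:
  assumes "sqs f" "finite F"
  shows "(\<Sum>u\<in>F. (cmod (f u))\<^sup>2) \<le> (\<Sum>\<^sub>\<infinity>u. (cmod (f u))\<^sup>2)"
  using assms unfolding sqs_def by (intro finite_sum_le_infsum) auto

lemma l2norm_sq: "(l2norm f)\<^sup>2 = (\<Sum>\<^sub>\<infinity>u. (cmod (f u))\<^sup>2)"
  unfolding l2norm_def by (simp add: infsum_nonneg)

lemma sqs_bound:
  assumes "B \<ge> 0" "\<And>F. finite F \<Longrightarrow> (\<Sum>u\<in>F. (cmod (f u))\<^sup>2) \<le> B\<^sup>2"
  shows "sqs f" "l2norm f \<le> B"
proof -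
  show s: "sqs f" unfolding sqs_def
  proof (rule nonneg_bdd_above_summable_on)
    show "bdd_above (sum (\<lambda>u. (cmod (f u))\<^sup>2) ` {F. F \<subseteq> UNIV \<and> finite F})"
      by (rule bdd_aboveI[of _ "B\<^sup>2"]) (use assms(2) in blast)
  qed simp
  have i: "(\<Sum>\<^sub>\<infinity>u. (cmod (f u))\<^sup>2) \<le> B\<^sup>2"
    using s assms unfolding sqs_def by (intro infsum_le_finite_sums) auto
  show "l2norm f \<le> B" unfolding l2norm_def
    using real_sqrt_le_mono[OF i] assms(1) by simp
qed

lemma pointwise_le:
  assumes "sqs f" shows "cmod (f u) \<le> l2norm f"
proof -
  have "(cmod (f u))\<^sup>2 \<le> (l2norm f)\<^sup>2"
    using finite_le_nsq[OF assms, of "{u}"] l2norm_sq[of f] by simp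
  then show ?thesis using l2norm_nonneg[of f] by (rule power2_le_imp_le)
qed

lemma sqs_zero: "sqs (\<lambda>u. 0)" unfolding sqs_def by simp

lemma l2norm_zero: "l2norm (\<lambda>u. 0) = 0" unfolding l2norm_def by simp

lemma sqs_add:
  assumes "sqs f" "sqs g" shows "sqs (\<lambda>u. f u + g u)"
proof -
  have "(\<lambda>u. 2 * (cmod (f u))\<^sup>2 + 2 * (cmod (g u))\<^sup>2) summable_on UNIV"
    using assms unfolding sqs_def by (intro summable_on_add summable_on_cmult_right)
  moreover have "(cmod (f u + g u))\<^sup>2 \<le> 2 * (cmod (f u))\<^sup>2 + 2 * (cmod (g u))\<^sup>2" for u
  proof -
    have "cmod (f u + g u) \<le> cmod (f u) + cmod (g u)" by (rule norm_triangle_ineq)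
    hence "(cmod (f u + g u))\<^sup>2 \<le> (cmod (f u) + cmod (g u))\<^sup>2" by (simp add: power_mono)
    also have "\<dots> \<le> 2 * (cmod (f u))\<^sup>2 + 2 * (cmod (g u))\<^sup>2"
    proof -
      have "0 \<le> (cmod (f u) - cmod (g u))\<^sup>2" by simp
      then show ?thesis unfolding power2_sum power2_diff by linarith
    qed
    finally show ?thesis .
  qed
  ultimately show ?thesis unfolding sqs_def
    by (rule summable_on_comparison_test) auto
qed

lemma sqs_cmult: assumes "sqs f" shows "sqs (\<lambda>u. c * f u)"
proof -
  have "(\<lambda>u. (cmod c)\<^sup>2 * (cmod (f u))\<^sup>2) summable_on UNIV"
    using assms unfolding sqs_def by (intro summable_on_cmult_right)
  then show ?thesis unfolding sqs_def by (simp add: norm_mult power_mult_distrib)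
qed

lemma l2norm_cmult: "l2norm (\<lambda>u. c * f u) = cmod c * l2norm f"
proof -
  have "(\<Sum>\<^sub>\<infinity>u. (cmod (c * f u))\<^sup>2) = (cmod c)\<^sup>2 * (\<Sum>\<^sub>\<infinity>u. (cmod (f u))\<^sup>2)"
    by (simp add: norm_mult power_mult_distrib infsum_cmult_right')
  then show ?thesis unfolding l2norm_def by (simp add: real_sqrt_mult)
qed

lemma sqs_minus: assumes "sqs f" "sqs g" shows "sqs (\<lambda>u. f u - g u)"
  using sqs_add[OF assms(1) sqs_cmult[OF assms(2), of "-1"]] by simp

lemma l2norm_triangle:
  fixes f g :: "('v,'e) vec"
  assumes "sqs f" "sqs g"
  shows "l2norm (\<lambda>u. f u + g u) \<le> l2norm f + l2norm g"
proof (rule sqs_bound(2))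
  show "0 \<le> l2norm f + l2norm g" using l2norm_nonneg[of f] l2norm_nonneg[of g] by linarith
  fix F :: "('v,'e) gpath set" assume F: "finite F"
  have "L2_set (\<lambda>u. cmod (f u + g u)) F \<le> L2_set (\<lambda>u. cmod (f u) + cmod (g u)) F"
    by (rule L2_set_mono) (auto simp: norm_triangle_ineq)
  also have "\<dots> \<le> L2_set (\<lambda>u. cmod (f u)) F + L2_set (\<lambda>u. cmod (g u)) F"
    by (rule L2_set_triangle_ineq)
  also have "L2_set (\<lambda>u. cmod (f u)) F \<le> l2norm f"
    unfolding L2_set_def l2norm_def using finite_le_nsq[OF assms(1) F] by simp
  also have "L2_set (\<lambda>u. cmod (g u)) F \<le> l2norm g"
    unfolding L2_set_def l2norm_def using finite_le_nsq[OF assms(2) F] by simp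
  finally have "L2_set (\<lambda>u. cmod (f u + g u)) F \<le> l2norm f + l2norm g" by simp
  then have "(L2_set (\<lambda>u. cmod (f u + g u)) F)\<^sup>2 \<le> (l2norm f + l2norm g)\<^sup>2"
    by (simp add: L2_set_nonneg power_mono)
  then show "(\<Sum>u\<in>F. (cmod (f u + g u))\<^sup>2) \<le> (l2norm f + l2norm g)\<^sup>2"
    by (simp add: L2_set_def sum_nonneg)
qed

lemma l2norm_eq0:
  assumes "sqs f" "l2norm f = 0" shows "f = (\<lambda>u. 0)"
proof
  fix u show "f u = 0" using pointwise_le[OF assms(1), of u] assms(2) by simp
qed

lemma l2norm_eq0':
  assumes "sqs f" "l2norm f \<le> 0" shows "f = (\<lambda>u. 0)"
  using l2norm_eq0[OF assms(1)] assms(2) l2norm_nonneg[of f] by linarith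

lemma l2norm_minus_commute: "l2norm (\<lambda>u. f u - g u) = l2norm (\<lambda>u. g u - f u)"
  using l2norm_cmult[of "-1" "\<lambda>u. f u - g u"] by simp

lemma l2norm_triangle_diff:
  assumes "sqs f" "sqs g" "sqs h"
  shows "l2norm (\<lambda>u. f u - h u) \<le> l2norm (\<lambda>u. f u - g u) + l2norm (\<lambda>u. g u - h u)"
  using l2norm_triangle[OF sqs_minus[OF assms(1,2)] sqs_minus[OF assms(2,3)]] by simp

lemma l2_lsc:
  assumes lim: "\<And>u. (\<lambda>k. g k u) \<longlonglongrightarrow> h u"
    and bd: "\<And>k. k \<ge> N \<Longrightarrow> sqs (g k) \<and> l2norm (g k) \<le> B"
  shows "sqs h" "l2norm h \<le> B"
proof -
  have B: "B \<ge> 0" using bd[of N] l2norm_nonneg by (meson order_trans order_refl)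
  have fs: "(\<Sum>u\<in>F. (cmod (h u))\<^sup>2) \<le> B\<^sup>2" if F: "finite F" for F
  proof -
    have "(\<lambda>k. \<Sum>u\<in>F. (cmod (g k u))\<^sup>2) \<longlonglongrightarrow> (\<Sum>u\<in>F. (cmod (h u))\<^sup>2)"
      by (intro tendsto_sum tendsto_power tendsto_norm lim)
    moreover have "\<forall>\<^sub>F k in sequentially. (\<Sum>u\<in>F. (cmod (g k u))\<^sup>2) \<le> B\<^sup>2"
    proof (rule eventually_sequentiallyI[of N])
      fix k assume "N \<le> k"
      with bd have "sqs (g k)" "l2norm (g k) \<le> B" by auto
      then have "(l2norm (g k))\<^sup>2 \<le> B\<^sup>2" by (intro power_mono) (auto simp: l2norm_nonneg)
      then show "(\<Sum>u\<in>F. (cmod (g k u))\<^sup>2) \<le> B\<^sup>2"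
        using finite_le_nsq[OF \<open>sqs (g k)\<close> F] l2norm_sq by (metis order_trans)
    qed
    ultimately show ?thesis by (rule tendsto_upperbound) simp
  qed
  show "sqs h" by (rule sqs_bound(1)[OF B fs])
  show "l2norm h \<le> B" by (rule sqs_bound(2)[OF B fs])
qed


lemma inj_bound:
  fixes f g :: "('v,'e) vec"
  assumes "sqs f" "inj_on h {u. g u \<noteq> 0}" "\<And>u. g u \<noteq> 0 \<Longrightarrow> cmod (g u) \<le> cmod (f (h u))"
  shows "sqs g" "l2norm g \<le> l2norm f"
proof -
  have fs: "(\<Sum>u\<in>F. (cmod (g u))\<^sup>2) \<le> (l2norm f)\<^sup>2" if F: "finite F" for F
  proof -
    let ?S = "{u\<in>F. g u \<noteq> 0}"
    have "(\<Sum>u\<in>F. (cmod (g u))\<^sup>2) = (\<Sum>u\<in>?S. (cmod (g u))\<^sup>2)"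
      using F by (intro sum.mono_neutral_right) auto
    also have "\<dots> \<le> (\<Sum>u\<in>?S. (cmod (f (h u)))\<^sup>2)"
      using assms(3) by (intro sum_mono power_mono) auto
    also have "\<dots> = (\<Sum>w\<in>h ` ?S. (cmod (f w))\<^sup>2)"
      using assms(2) by (subst sum.reindex) (auto intro: inj_on_subset)
    also have "\<dots> \<le> (l2norm f)\<^sup>2"
      using finite_le_nsq[OF assms(1)] F l2norm_sq[of f] by simp
    finally show ?thesis .
  qed
  show "sqs g" by (rule sqs_bound(1)[OF l2norm_nonneg fs])
  show "l2norm g \<le> l2norm f" by (rule sqs_bound(2)[OF l2norm_nonneg fs])
qed

locale gr =
  fixes V :: "'v set" and E :: "'e set" and r s :: "'e \<Rightarrow> 'v"
  assumes edges_in: "\<And>e. e \<in> E \<Longrightarrow> r e \<in> V \<and> s e \<in> V"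
begin

abbreviation "H \<equiv> l2 V E r s"
abbreviation "vp \<equiv> valid_path V E r s"
abbreviation "L \<equiv> shiftL V E r s"
abbreviation "P \<equiv> projP V E r s"
abbreviation "TP \<equiv> tpoly V E r s"
abbreviation "A \<equiv> tensor_alg V E r s"

lemma H_iff: "f \<in> H \<longleftrightarrow> (\<forall>u. \<not> vp u \<longrightarrow> f u = 0) \<and> sqs f"
  unfolding l2_def sqs_def by auto

lemma H_sqs: "f \<in> H \<Longrightarrow> sqs f" by (simp add: H_iff)

lemma H_zero: "(\<lambda>u. 0) \<in> H" by (simp add: H_iff sqs_zero)

lemma H_add: "f \<in> H \<Longrightarrow> g \<in> H \<Longrightarrow> (\<lambda>u. f u + g u) \<in> H"
  by (simp add: H_iff sqs_add)

lemma H_cmult: "f \<in> H \<Longrightarrow> (\<lambda>u. c * f u) \<in> H"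
  by (simp add: H_iff sqs_cmult)

lemma H_minus: "f \<in> H \<Longrightarrow> g \<in> H \<Longrightarrow> (\<lambda>u. f u - g u) \<in> H"
  by (simp add: H_iff sqs_minus)

definition gop :: "('v,'e) op \<Rightarrow> bool" where
  "gop T \<longleftrightarrow> (\<forall>f. f \<notin> H \<longrightarrow> T f = (\<lambda>u. 0)) \<and> (\<forall>f\<in>H. T f \<in> H) \<and>
     (\<forall>f\<in>H. \<forall>g\<in>H. T (\<lambda>u. f u + g u) = (\<lambda>u. T f u + T g u)) \<and>
     (\<forall>c. \<forall>f\<in>H. T (\<lambda>u. c * f u) = (\<lambda>u. c * T f u)) \<and>
     (\<exists>C\<ge>0. \<forall>f\<in>H. l2norm (T f) \<le> C * l2norm f)"

lemma gopI:
  assumes "\<And>f. f \<notin> H \<Longrightarrow> T f = (\<lambda>u. 0)" "\<And>f. f \<in> H \<Longrightarrow> T f \<in> H"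
    "\<And>f g. f \<in> H \<Longrightarrow> g \<in> H \<Longrightarrow> T (\<lambda>u. f u + g u) = (\<lambda>u. T f u + T g u)"
    "\<And>c f. f \<in> H \<Longrightarrow> T (\<lambda>u. c * f u) = (\<lambda>u. c * T f u)"
    "C \<ge> 0" "\<And>f. f \<in> H \<Longrightarrow> l2norm (T f) \<le> C * l2norm f"
  shows "gop T"
  unfolding gop_def using assms by blast

lemma gop_off: "gop T \<Longrightarrow> f \<notin> H \<Longrightarrow> T f = (\<lambda>u. 0)" by (simp add: gop_def)
lemma gop_H: "gop T \<Longrightarrow> f \<in> H \<Longrightarrow> T f \<in> H" by (simp add: gop_def)
lemma gop_add: "gop T \<Longrightarrow> f \<in> H \<Longrightarrow> g \<in> H \<Longrightarrow> T (\<lambda>u. f u + g u) = (\<lambda>u. T f u + T g u)"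
  by (simp add: gop_def)
lemma gop_cmult: "gop T \<Longrightarrow> f \<in> H \<Longrightarrow> T (\<lambda>u. c * f u) = (\<lambda>u. c * T f u)"
  by (simp add: gop_def)
lemma gop_bound: "gop T \<Longrightarrow> \<exists>C\<ge>0. \<forall>f\<in>H. l2norm (T f) \<le> C * l2norm f"
  by (simp add: gop_def)

lemma gop_zero: assumes "gop T" shows "T (\<lambda>u. 0) = (\<lambda>u. 0)"
  using gop_cmult[OF assms H_zero, of 0] by simp

lemma gop_minus: assumes "gop T" "f \<in> H" "g \<in> H"
  shows "T (\<lambda>u. f u - g u) = (\<lambda>u. T f u - T g u)"
proof -
  have "T (\<lambda>u. f u - g u) = T (\<lambda>u. f u + (\<lambda>u. (-1) * g u) u)" by simp
  also have "\<dots> = (\<lambda>u. T f u + T (\<lambda>u. (-1) * g u) u)"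
    by (rule gop_add[OF assms(1,2) H_cmult[OF assms(3)]])
  also have "\<dots> = (\<lambda>u. T f u - T g u)" using gop_cmult[OF assms(1,3), of "-1"] by simp
  finally show ?thesis .
qed

lemma gop_sum_op: assumes "gop S" "gop T" shows "gop (\<lambda>f u. S f u + T f u)"
proof -
  obtain C1 where C1: "C1 \<ge> 0" "\<forall>f\<in>H. l2norm (S f) \<le> C1 * l2norm f" using gop_bound[OF assms(1)] by blast
  obtain C2 where C2: "C2 \<ge> 0" "\<forall>f\<in>H. l2norm (T f) \<le> C2 * l2norm f" using gop_bound[OF assms(2)] by blast
  show ?thesis
  proof (rule gopI[where C = "C1 + C2"])
    fix f assume "f \<in> H"
    then show "(\<lambda>u. S f u + T f u) \<in> H" using assms by (intro H_add gop_H[OF assms(1)] gop_H[OF assms(2)])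
    have "l2norm (\<lambda>u. S f u + T f u) \<le> l2norm (S f) + l2norm (T f)"
      using assms \<open>f \<in> H\<close> by (intro l2norm_triangle H_sqs[OF gop_H[OF assms(1)]] H_sqs[OF gop_H[OF assms(2)]])
    also have "\<dots> \<le> (C1 + C2) * l2norm f" using C1 C2 \<open>f \<in> H\<close> by (simp add: algebra_simps add_mono)
    finally show "l2norm (\<lambda>u. S f u + T f u) \<le> (C1 + C2) * l2norm f" .
  next
    fix f g assume "f \<in> H" "g \<in> H"
    then show "(\<lambda>u. S (\<lambda>u. f u + g u) u + T (\<lambda>u. f u + g u) u) = (\<lambda>u. (S f u + T f u) + (S g u + T g u))"
      using gop_add[OF assms(1)] gop_add[OF assms(2)] by (simp add: algebra_simps)
  next
    fix c f assume "f \<in> H"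
    then show "(\<lambda>u. S (\<lambda>u. c * f u) u + T (\<lambda>u. c * f u) u) = (\<lambda>u. c * (S f u + T f u))"
      using gop_cmult[OF assms(1)] gop_cmult[OF assms(2)] by (simp add: algebra_simps)
  next
    fix f assume "f \<notin> H" then show "(\<lambda>u. S f u + T f u) = (\<lambda>u. 0)"
      using gop_off[OF assms(1)] gop_off[OF assms(2)] by simp
  next
    show "0 \<le> C1 + C2" using C1 C2 by simp
  qed
qed

lemma gop_smult_op: assumes "gop T" shows "gop (\<lambda>f u. c * T f u)"
proof -
  obtain C where C: "C \<ge> 0" "\<forall>f\<in>H. l2norm (T f) \<le> C * l2norm f" using gop_bound[OF assms(1)] by blast
  show ?thesis
  proof (rule gopI[where C = "cmod c * C"])
    fix f assume "f \<in> H"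
    then show "(\<lambda>u. c * T f u) \<in> H" using assms by (intro H_cmult gop_H[OF assms(1)])
    show "l2norm (\<lambda>u. c * T f u) \<le> cmod c * C * l2norm f"
      using C \<open>f \<in> H\<close> by (simp add: l2norm_cmult mult.assoc mult_left_mono)
  next
    fix f g assume "f \<in> H" "g \<in> H"
    then show "(\<lambda>u. c * T (\<lambda>u. f u + g u) u) = (\<lambda>u. c * T f u + c * T g u)"
      using gop_add[OF assms(1)] by (simp add: algebra_simps)
  next
    fix d f assume "f \<in> H"
    then show "(\<lambda>u. c * T (\<lambda>u. d * f u) u) = (\<lambda>u. d * (c * T f u))"
      using gop_cmult[OF assms(1)] by (simp add: algebra_simps)
  next
    fix f assume "f \<notin> H" then show "(\<lambda>u. c * T f u) = (\<lambda>u. 0)"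
      using gop_off[OF assms(1)] by simp
  next
    show "0 \<le> cmod c * C" using C by simp
  qed
qed

lemma gop_comp: assumes "gop S" "gop T" shows "gop (S \<circ> T)"
proof -
  obtain C1 where C1: "C1 \<ge> 0" "\<forall>f\<in>H. l2norm (S f) \<le> C1 * l2norm f" using gop_bound[OF assms(1)] by blast
  obtain C2 where C2: "C2 \<ge> 0" "\<forall>f\<in>H. l2norm (T f) \<le> C2 * l2norm f" using gop_bound[OF assms(2)] by blast
  show ?thesis
  proof (rule gopI[where C = "C1 * C2"])
    fix f assume f: "f \<in> H"
    then show "(S \<circ> T) f \<in> H" using assms by (simp add: gop_H)
    have "l2norm (S (T f)) \<le> C1 * l2norm (T f)" using C1 gop_H[OF assms(2) f] by blast
    also have "\<dots> \<le> C1 * (C2 * l2norm f)" using C1 C2 f by (intro mult_left_mono) auto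
    finally show "l2norm ((S \<circ> T) f) \<le> C1 * C2 * l2norm f" by (simp add: mult.assoc)
  next
    fix f assume "f \<notin> H" then show "(S \<circ> T) f = (\<lambda>u. 0)"
      using gop_off[OF assms(2)] gop_zero[OF assms(1)] by simp
  next
    fix f g assume "f \<in> H" "g \<in> H"
    then show "(S \<circ> T) (\<lambda>u. f u + g u) = (\<lambda>u. (S \<circ> T) f u + (S \<circ> T) g u)"
      using gop_add[OF assms(2)] gop_add[OF assms(1)] gop_H[OF assms(2)] by simp
  next
    fix c f assume "f \<in> H"
    then show "(S \<circ> T) (\<lambda>u. c * f u) = (\<lambda>u. c * (S \<circ> T) f u)"
      using gop_cmult[OF assms(2)] gop_cmult[OF assms(1)] gop_H[OF assms(2)] by simp
  next
    show "0 \<le> C1 * C2" using C1 C2 by simp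
  qed
qed

lemma L_apply: "f \<in> H \<Longrightarrow> L e f u = (if vp u then (case u of Edges (e' # es) \<Rightarrow>
   (if e' = e then f (if es = [] then Vtx (s e) else Edges es) else 0) | _ \<Rightarrow> 0) else 0)"
  by (simp add: shiftL_def)

lemma P_apply: "f \<in> H \<Longrightarrow> P v f u = (if vp u \<and> prange r u = v then f u else 0)"
  by (simp add: projP_def)

lemma L_off: "f \<notin> H \<Longrightarrow> L e f = (\<lambda>u. 0)" by (simp add: shiftL_def)
lemma P_off: "f \<notin> H \<Longrightarrow> P v f = (\<lambda>u. 0)" by (simp add: projP_def)

lemma gop_L: "gop (L e)"
proof (rule gopI[where C = 1])
  fix f assume f: "f \<in> H"
  define h where "h u = (case u of Edges (e' # es) \<Rightarrow> (if es = [] then Vtx (s e) else Edges es) | _ \<Rightarrow> u)" for u :: "('v,'e) gpath"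
  have nz: "\<exists>es. u = Edges (e # es)" if "L e f u \<noteq> 0" for u
    using that by (auto simp: L_apply[OF f] split: gpath.splits list.splits if_splits)
  have inj: "inj_on h {u. L e f u \<noteq> 0}"
  proof (rule inj_onI)
    fix u1 u2 assume "u1 \<in> {u. L e f u \<noteq> 0}" "u2 \<in> {u. L e f u \<noteq> 0}" "h u1 = h u2"
    then obtain es1 es2 where "u1 = Edges (e # es1)" "u2 = Edges (e # es2)" "h u1 = h u2"
      using nz by blast
    then show "u1 = u2" by (auto simp: h_def split: if_splits)
  qed
  have eq: "cmod (L e f u) \<le> cmod (f (h u))" if "L e f u \<noteq> 0" for u
    using that nz[OF that] by (auto simp: L_apply[OF f] h_def)
  have "sqs (L e f)" "l2norm (L e f) \<le> l2norm f"
    using inj_bound[OF H_sqs[OF f] inj eq] by auto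
  then show "L e f \<in> H" "l2norm (L e f) \<le> 1 * l2norm f"
    by (auto simp: H_iff L_apply[OF f])
next
  fix f g assume "f \<in> H" "g \<in> H"
  then show "L e (\<lambda>u. f u + g u) = (\<lambda>u. L e f u + L e g u)"
    using H_add[of f g] by (auto simp: L_apply split: gpath.splits list.splits)
next
  fix c f assume "f \<in> H"
  then show "L e (\<lambda>u. c * f u) = (\<lambda>u. c * L e f u)"
    using H_cmult[of f c] by (auto simp: L_apply split: gpath.splits list.splits)
qed (auto simp: L_off)

lemma gop_P: "gop (P v)"
proof (rule gopI[where C = 1])
  fix f assume f: "f \<in> H"
  have "sqs (P v f)" "l2norm (P v f) \<le> l2norm f"
    by (rule inj_bound[OF H_sqs[OF f], of id]; simp add: P_apply[OF f])+
  then show "P v f \<in> H" "l2norm (P v f) \<le> 1 * l2norm f"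
    by (auto simp: H_iff P_apply[OF f])
next
  fix f g assume "f \<in> H" "g \<in> H"
  then show "P v (\<lambda>u. f u + g u) = (\<lambda>u. P v f u + P v g u)"
    using H_add[of f g] by (auto simp: P_apply)
next
  fix c f assume "f \<in> H"
  then show "P v (\<lambda>u. c * f u) = (\<lambda>u. c * P v f u)"
    using H_cmult[of f c] by (auto simp: P_apply)
qed (auto simp: P_off)

lemma gop_TP: "p \<in> TP \<Longrightarrow> gop p"
proof (induction rule: tpoly.induct)
  case (mult p q) then show ?case using gop_comp[of p q] by (simp add: comp_def)
qed (auto intro: gop_L gop_P gop_sum_op gop_smult_op)

end


lemma le_eps:
  fixes x K :: real
  assumes "K \<ge> 0" "\<And>\<epsilon>. \<epsilon> > 0 \<Longrightarrow> x \<le> \<epsilon> * K"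
  shows "x \<le> 0"
proof (rule ccontr)
  assume "\<not> x \<le> 0"
  then have x: "x > 0" by simp
  have "x \<le> (x / (2 * (K + 1))) * K" using assms(2)[of "x / (2 * (K + 1))"] x assms(1) by simp
  also have "\<dots> = x * (K / (2 * (K + 1)))" by simp
  also have "\<dots> < x * 1" using x assms(1) by (intro mult_strict_left_mono) auto
  finally show False by simp
qed

lemma l2norm_diff_le:
  fixes a b :: "('v,'e) vec"
  assumes "sqs a" "sqs b" shows "l2norm (\<lambda>u. a u - b u) \<le> l2norm a + l2norm b"
proof -
  have "l2norm (\<lambda>u. a u + (\<lambda>u. (-1) * b u) u) \<le> l2norm a + l2norm (\<lambda>u. (-1) * b u)"
    by (rule l2norm_triangle[OF assms(1) sqs_cmult[OF assms(2)]])
  then show ?thesis using l2norm_cmult[of "-1" b] by simp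
qed

context gr begin

lemma A_iff: "T \<in> A \<longleftrightarrow> (\<forall>f. f \<notin> H \<longrightarrow> T f = (\<lambda>u. 0)) \<and> (\<forall>f\<in>H. T f \<in> H) \<and>
     (\<forall>\<epsilon>>0. \<exists>p\<in>TP. \<forall>f\<in>H. l2norm (\<lambda>u. T f u - p f u) \<le> \<epsilon> * l2norm f)"
  unfolding tensor_alg_def by simp

lemma A_approx: "T \<in> A \<Longrightarrow> \<epsilon> > 0 \<Longrightarrow> \<exists>p\<in>TP. \<forall>f\<in>H. l2norm (\<lambda>u. T f u - p f u) \<le> \<epsilon> * l2norm f"
  unfolding A_iff by blast

lemma A_off: "T \<in> A \<Longrightarrow> f \<notin> H \<Longrightarrow> T f = (\<lambda>u. 0)" unfolding A_iff by blast
lemma A_H: "T \<in> A \<Longrightarrow> f \<in> H \<Longrightarrow> T f \<in> H" unfolding A_iff by blast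

lemma TP_A: assumes "p \<in> TP" shows "p \<in> A"
  unfolding A_iff
proof (intro conjI allI impI ballI)
  show "\<And>f. f \<notin> H \<Longrightarrow> p f = (\<lambda>u. 0)" using gop_off[OF gop_TP[OF assms]] by blast
  show "\<And>f. f \<in> H \<Longrightarrow> p f \<in> H" using gop_H[OF gop_TP[OF assms]] by blast
  fix \<epsilon> :: real assume "\<epsilon> > 0"
  show "\<exists>q\<in>TP. \<forall>f\<in>H. l2norm (\<lambda>u. p f u - q f u) \<le> \<epsilon> * l2norm f"
    using assms \<open>\<epsilon> > 0\<close> l2norm_nonneg by (intro bexI[of _ p]) (auto simp: l2norm_zero l2norm_nonneg)
qed

lemma A_gop: assumes T: "T \<in> A" shows "gop T"
proof -
  obtain p where p: "p \<in> TP" "\<forall>f\<in>H. l2norm (\<lambda>u. T f u - p f u) \<le> 1 * l2norm f"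
    using A_approx[OF T, of 1] by auto
  obtain C where C: "C \<ge> 0" "\<forall>f\<in>H. l2norm (p f) \<le> C * l2norm f"
    using gop_bound[OF gop_TP[OF p(1)]] by blast
  show ?thesis
  proof (rule gopI[where C = "1 + C"])
    show "\<And>f. f \<notin> H \<Longrightarrow> T f = (\<lambda>u. 0)" using A_off[OF T] by blast
    show "\<And>f. f \<in> H \<Longrightarrow> T f \<in> H" using A_H[OF T] by blast
    show "0 \<le> 1 + C" using C by simp
  next
    fix f assume f: "f \<in> H"
    have "l2norm (T f) = l2norm (\<lambda>u. (T f u - p f u) + p f u)" by simp
    also have "\<dots> \<le> l2norm (\<lambda>u. T f u - p f u) + l2norm (p f)"
      by (intro l2norm_triangle sqs_minus H_sqs A_H[OF T f] gop_H[OF gop_TP[OF p(1)] f])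
    also have "\<dots> \<le> 1 * l2norm f + C * l2norm f" using p C f by (intro add_mono) auto
    finally show "l2norm (T f) \<le> (1 + C) * l2norm f" by (simp add: algebra_simps)
  next
    fix f g assume f: "f \<in> H" and g: "g \<in> H"
    have fg: "(\<lambda>u. f u + g u) \<in> H" using H_add[OF f g] .
    define D where "D = (\<lambda>u. T (\<lambda>u. f u + g u) u - (T f u + T g u))"
    have sT: "sqs (T h)" if "h \<in> H" for h using H_sqs[OF A_H[OF T that]] .
    have "l2norm D \<le> 0"
    proof (rule le_eps)
      show "0 \<le> l2norm (\<lambda>u. f u + g u) + l2norm f + l2norm g"
        using l2norm_nonneg[of f] l2norm_nonneg[of g] l2norm_nonneg[of "(\<lambda>u. f u + g u)"] by linarith
      fix \<epsilon> :: real assume "\<epsilon> > 0"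
      then obtain q where q: "q \<in> TP" "\<forall>h\<in>H. l2norm (\<lambda>u. T h u - q h u) \<le> \<epsilon> * l2norm h"
        using A_approx[OF T] by blast
      have gq: "gop q" using gop_TP[OF q(1)] .
      have sq: "sqs (q h)" if "h \<in> H" for h using H_sqs[OF gop_H[OF gq that]] .
      have "D = (\<lambda>u. (T (\<lambda>u. f u + g u) u - q (\<lambda>u. f u + g u) u) - (T f u - q f u) - (T g u - q g u))"
        unfolding D_def gop_add[OF gq f g] by (simp add: algebra_simps)
      then have "l2norm D = l2norm (\<lambda>u. (T (\<lambda>u. f u + g u) u - q (\<lambda>u. f u + g u) u) - (T f u - q f u) - (T g u - q g u))"
        by simp
      also have "\<dots> \<le> l2norm (\<lambda>u. (T (\<lambda>u. f u + g u) u - q (\<lambda>u. f u + g u) u) - (T f u - q f u)) + l2norm (\<lambda>u. T g u - q g u)"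
        by (intro l2norm_diff_le sqs_minus sT sq f g fg)
      also have "\<dots> \<le> (l2norm (\<lambda>u. T (\<lambda>u. f u + g u) u - q (\<lambda>u. f u + g u) u) + l2norm (\<lambda>u. T f u - q f u)) + l2norm (\<lambda>u. T g u - q g u)"
        by (intro add_mono l2norm_diff_le sqs_minus sT sq f g fg order_refl)
      also have "\<dots> \<le> (\<epsilon> * l2norm (\<lambda>u. f u + g u) + \<epsilon> * l2norm f) + \<epsilon> * l2norm g"
        using q(2) f g fg by (intro add_mono) auto
      finally show "l2norm D \<le> \<epsilon> * (l2norm (\<lambda>u. f u + g u) + l2norm f + l2norm g)"
        by (simp add: algebra_simps)
    qed
    moreover have "sqs D" unfolding D_def by (intro sqs_minus sqs_add sT f g fg)
    ultimately have "D = (\<lambda>u. 0)" using l2norm_eq0' by blast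
    then have "\<And>u. D u = 0" by simp
    then show "T (\<lambda>u. f u + g u) = (\<lambda>u. T f u + T g u)"
      by (intro ext) (simp add: D_def)
  next
    fix c f assume f: "f \<in> H"
    have cf: "(\<lambda>u. c * f u) \<in> H" using H_cmult[OF f] .
    define D where "D = (\<lambda>u. T (\<lambda>u. c * f u) u - c * T f u)"
    have sT: "sqs (T h)" if "h \<in> H" for h using H_sqs[OF A_H[OF T that]] .
    have "l2norm D \<le> 0"
    proof (rule le_eps)
      show "0 \<le> l2norm (\<lambda>u. c * f u) + cmod c * l2norm f"
        using l2norm_nonneg[of f] l2norm_nonneg[of "(\<lambda>u. c * f u)"] by simp
      fix \<epsilon> :: real assume "\<epsilon> > 0"
      then obtain q where q: "q \<in> TP" "\<forall>h\<in>H. l2norm (\<lambda>u. T h u - q h u) \<le> \<epsilon> * l2norm h"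
        using A_approx[OF T] by blast
      have gq: "gop q" using gop_TP[OF q(1)] .
      have sq: "sqs (q h)" if "h \<in> H" for h using H_sqs[OF gop_H[OF gq that]] .
      have "D = (\<lambda>u. (T (\<lambda>u. c * f u) u - q (\<lambda>u. c * f u) u) - (\<lambda>u. c * (T f u - q f u)) u)"
        unfolding D_def gop_cmult[OF gq f] by (simp add: algebra_simps)
      then have "l2norm D = l2norm (\<lambda>u. (T (\<lambda>u. c * f u) u - q (\<lambda>u. c * f u) u) - (\<lambda>u. c * (T f u - q f u)) u)"
        by simp
      also have "\<dots> \<le> l2norm (\<lambda>u. T (\<lambda>u. c * f u) u - q (\<lambda>u. c * f u) u) + l2norm (\<lambda>u. c * (T f u - q f u))"
        by (intro l2norm_diff_le sqs_minus sqs_cmult sT sq f cf)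
      also have "\<dots> = l2norm (\<lambda>u. T (\<lambda>u. c * f u) u - q (\<lambda>u. c * f u) u) + cmod c * l2norm (\<lambda>u. T f u - q f u)"
        by (simp add: l2norm_cmult)
      also have "\<dots> \<le> \<epsilon> * l2norm (\<lambda>u. c * f u) + cmod c * (\<epsilon> * l2norm f)"
        using q(2) f cf by (intro add_mono mult_left_mono) auto
      finally show "l2norm D \<le> \<epsilon> * (l2norm (\<lambda>u. c * f u) + cmod c * l2norm f)"
        by (simp add: algebra_simps)
    qed
    moreover have "sqs D" unfolding D_def by (intro sqs_minus sqs_cmult sT f cf)
    ultimately have "D = (\<lambda>u. 0)" using l2norm_eq0' by blast
    then have "\<And>u. D u = 0" by simp
    then show "T (\<lambda>u. c * f u) = (\<lambda>u. c * T f u)"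
      by (intro ext) (simp add: D_def)
  qed
qed

lemma A_bound: "T \<in> A \<Longrightarrow> \<exists>C\<ge>0. \<forall>f\<in>H. l2norm (T f) \<le> C * l2norm f"
  using gop_bound[OF A_gop] .

lemma A_add: assumes S: "S \<in> A" and T: "T \<in> A" shows "(\<lambda>f u. S f u + T f u) \<in> A"
  unfolding A_iff
proof (intro conjI allI impI ballI)
  show "\<And>f. f \<notin> H \<Longrightarrow> (\<lambda>u. S f u + T f u) = (\<lambda>u. 0)" using A_off[OF S] A_off[OF T] by simp
  show "\<And>f. f \<in> H \<Longrightarrow> (\<lambda>u. S f u + T f u) \<in> H" using A_H[OF S] A_H[OF T] H_add by blast
  fix \<epsilon> :: real assume e: "\<epsilon> > 0"
  obtain p where p: "p \<in> TP" "\<forall>h\<in>H. l2norm (\<lambda>u. S h u - p h u) \<le> (\<epsilon>/2) * l2norm h"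
    using A_approx[OF S, of "\<epsilon>/2"] e by auto
  obtain q where q: "q \<in> TP" "\<forall>h\<in>H. l2norm (\<lambda>u. T h u - q h u) \<le> (\<epsilon>/2) * l2norm h"
    using A_approx[OF T, of "\<epsilon>/2"] e by auto
  show "\<exists>p\<in>TP. \<forall>f\<in>H. l2norm (\<lambda>u. S f u + T f u - p f u) \<le> \<epsilon> * l2norm f"
  proof (intro bexI[of _ "\<lambda>f u. p f u + q f u"] ballI)
    show "(\<lambda>f u. p f u + q f u) \<in> TP" using p(1) q(1) by (rule tpoly.add)
    fix f assume f: "f \<in> H"
    have "l2norm (\<lambda>u. S f u + T f u - (p f u + q f u)) = l2norm (\<lambda>u. (S f u - p f u) + (T f u - q f u))"
      by (simp add: algebra_simps)
    also have "\<dots> \<le> l2norm (\<lambda>u. S f u - p f u) + l2norm (\<lambda>u. T f u - q f u)"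
      by (intro l2norm_triangle sqs_minus H_sqs A_H[OF S f] A_H[OF T f]
          gop_H[OF gop_TP[OF p(1)] f] gop_H[OF gop_TP[OF q(1)] f])
    also have "\<dots> \<le> (\<epsilon>/2) * l2norm f + (\<epsilon>/2) * l2norm f" using p q f by (intro add_mono) auto
    finally show "l2norm (\<lambda>u. S f u + T f u - (p f u + q f u)) \<le> \<epsilon> * l2norm f" by simp
  qed
qed

lemma A_smult: assumes T: "T \<in> A" shows "(\<lambda>f u. c * T f u) \<in> A"
  unfolding A_iff
proof (intro conjI allI impI ballI)
  show "\<And>f. f \<notin> H \<Longrightarrow> (\<lambda>u. c * T f u) = (\<lambda>u. 0)" using A_off[OF T] by simp
  show "\<And>f. f \<in> H \<Longrightarrow> (\<lambda>u. c * T f u) \<in> H" using A_H[OF T] H_cmult by blast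
  fix \<epsilon> :: real assume e: "\<epsilon> > 0"
  have e': "\<epsilon>/(cmod c + 1) > 0" using e by (intro divide_pos_pos) (auto intro: add_nonneg_pos)
  obtain q where q: "q \<in> TP" "\<forall>h\<in>H. l2norm (\<lambda>u. T h u - q h u) \<le> (\<epsilon>/(cmod c + 1)) * l2norm h"
    using A_approx[OF T e'] by blast
  show "\<exists>p\<in>TP. \<forall>f\<in>H. l2norm (\<lambda>u. c * T f u - p f u) \<le> \<epsilon> * l2norm f"
  proof (intro bexI[of _ "\<lambda>f u. c * q f u"] ballI)
    show "(\<lambda>f u. c * q f u) \<in> TP" using q(1) by (rule tpoly.smult)
    fix f assume f: "f \<in> H"
    have "l2norm (\<lambda>u. c * T f u - c * q f u) = l2norm (\<lambda>u. c * (T f u - q f u))"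
      by (simp add: algebra_simps)
    also have "\<dots> = cmod c * l2norm (\<lambda>u. T f u - q f u)" by (simp add: l2norm_cmult)
    also have "\<dots> \<le> cmod c * ((\<epsilon>/(cmod c + 1)) * l2norm f)" using q f by (intro mult_left_mono) auto
    also have "\<dots> = (\<epsilon> * l2norm f) * (cmod c / (cmod c + 1))" by (simp add: field_simps)
    also have "\<dots> \<le> (\<epsilon> * l2norm f) * 1"
      using e l2norm_nonneg[of f] by (intro mult_left_mono) (auto simp: divide_le_eq_1 add_nonneg_pos)
    finally show "l2norm (\<lambda>u. c * T f u - c * q f u) \<le> \<epsilon> * l2norm f" by simp
  qed
qed

lemma A_comp: assumes S: "S \<in> A" and T: "T \<in> A" shows "S \<circ> T \<in> A"
  unfolding A_iff
proof (intro conjI allI impI ballI)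
  show "\<And>f. f \<notin> H \<Longrightarrow> (S \<circ> T) f = (\<lambda>u. 0)"
    using A_off[OF T] gop_zero[OF A_gop[OF S]] by simp
  show "\<And>f. f \<in> H \<Longrightarrow> (S \<circ> T) f \<in> H" using A_H[OF S] A_H[OF T] by simp
  fix \<epsilon> :: real assume e: "\<epsilon> > 0"
  obtain CT where CT: "CT \<ge> 0" "\<forall>f\<in>H. l2norm (T f) \<le> CT * l2norm f" using A_bound[OF T] by blast
  define e1 where "e1 = \<epsilon> / (2 * (CT + 1))"
  have e1: "e1 > 0" using e CT by (simp add: e1_def add_pos_nonneg)
  obtain p where p: "p \<in> TP" "\<forall>h\<in>H. l2norm (\<lambda>u. S h u - p h u) \<le> e1 * l2norm h"
    using A_approx[OF S e1] by auto
  obtain Cp where Cp: "Cp \<ge> 0" "\<forall>f\<in>H. l2norm (p f) \<le> Cp * l2norm f"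
    using gop_bound[OF gop_TP[OF p(1)]] by blast
  define e2 where "e2 = \<epsilon> / (2 * (Cp + 1))"
  have e2: "e2 > 0" using e Cp by (simp add: e2_def add_pos_nonneg)
  obtain q where q: "q \<in> TP" "\<forall>h\<in>H. l2norm (\<lambda>u. T h u - q h u) \<le> e2 * l2norm h"
    using A_approx[OF T e2] by auto
  have gp: "gop p" using gop_TP[OF p(1)] .
  have gq: "gop q" using gop_TP[OF q(1)] .
  show "\<exists>pq\<in>TP. \<forall>f\<in>H. l2norm (\<lambda>u. (S \<circ> T) f u - pq f u) \<le> \<epsilon> * l2norm f"
  proof (intro bexI[of _ "p \<circ> q"] ballI)
    show "p \<circ> q \<in> TP" using p(1) q(1) by (rule tpoly.mult)
    fix f assume f: "f \<in> H"
    have Tf: "T f \<in> H" using A_H[OF T f] .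
    have qf: "q f \<in> H" using gop_H[OF gq f] .
    have d: "(\<lambda>u. T f u - q f u) \<in> H" using H_minus[OF Tf qf] .
    have "l2norm (\<lambda>u. (S \<circ> T) f u - (p \<circ> q) f u) = l2norm (\<lambda>u. (S (T f) u - p (T f) u) + p (\<lambda>u. T f u - q f u) u)"
      using gop_minus[OF gp Tf qf] by simp
    also have "\<dots> \<le> l2norm (\<lambda>u. S (T f) u - p (T f) u) + l2norm (p (\<lambda>u. T f u - q f u))"
      by (intro l2norm_triangle sqs_minus H_sqs A_H[OF S Tf] gop_H[OF gp Tf] gop_H[OF gp d])
    also have "\<dots> \<le> e1 * l2norm (T f) + Cp * l2norm (\<lambda>u. T f u - q f u)"
      using p(2) Cp(2) Tf d by (intro add_mono) auto
    also have "\<dots> \<le> e1 * (CT * l2norm f) + Cp * (e2 * l2norm f)"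
      using CT Cp e1 e2 q(2) f by (intro add_mono mult_left_mono) auto
    also have "\<dots> = (\<epsilon> * l2norm f) * (CT / (2 * (CT + 1)) + Cp / (2 * (Cp + 1)))"
      unfolding e1_def e2_def using CT Cp by (simp add: field_simps)
    also have "\<dots> \<le> (\<epsilon> * l2norm f) * 1"
    proof (intro mult_left_mono)
      have "CT / (2 * (CT + 1)) \<le> 1/2" using CT by (simp add: field_simps)
      moreover have "Cp / (2 * (Cp + 1)) \<le> 1/2" using Cp by (simp add: field_simps)
      ultimately show "CT / (2 * (CT + 1)) + Cp / (2 * (Cp + 1)) \<le> 1" by linarith
    qed (use e l2norm_nonneg[of f] in auto)
    finally show "l2norm (\<lambda>u. (S \<circ> T) f u - (p \<circ> q) f u) \<le> \<epsilon> * l2norm f" by simp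
  qed
qed

lemma L_A: "e \<in> E \<Longrightarrow> L e \<in> A" by (intro TP_A tpoly.gen_L)
lemma P_A: "v \<in> V \<Longrightarrow> P v \<in> A" by (intro TP_A tpoly.gen_P)

end


lemma sqs_sum:
  fixes g :: "nat \<Rightarrow> ('v,'e) vec"
  assumes "\<And>i. i \<in> I \<Longrightarrow> sqs (g i)" "finite I"
  shows "sqs (\<lambda>u. \<Sum>i\<in>I. g i u)"
  using assms(2,1)
proof (induction I rule: finite_induct)
  case empty then show ?case by (simp add: sqs_zero)
next
  case (insert i I)
  then show ?case using sqs_add[of "g i" "\<lambda>u. \<Sum>i\<in>I. g i u"] by simp
qed

lemma l2norm_sum:
  fixes g :: "nat \<Rightarrow> ('v,'e) vec"
  assumes "\<And>i. i \<in> I \<Longrightarrow> sqs (g i)" "finite I"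
  shows "l2norm (\<lambda>u. \<Sum>i\<in>I. g i u) \<le> (\<Sum>i\<in>I. l2norm (g i))"
  using assms(2,1)
proof (induction I rule: finite_induct)
  case empty then show ?case by (simp add: l2norm_zero)
next
  case (insert i I)
  have s1: "sqs (g i)" using insert by simp
  have s2: "sqs (\<lambda>u. \<Sum>i\<in>I. g i u)" using insert by (intro sqs_sum) auto
  have "l2norm (\<lambda>u. \<Sum>j\<in>insert i I. g j u) = l2norm (\<lambda>u. g i u + (\<lambda>u. \<Sum>j\<in>I. g j u) u)"
    using insert by simp
  also have "\<dots> \<le> l2norm (g i) + l2norm (\<lambda>u. \<Sum>j\<in>I. g j u)"
    using l2norm_triangle[OF s1 s2] by simp
  also have "\<dots> \<le> l2norm (g i) + (\<Sum>j\<in>I. l2norm (g j))" using insert by simp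
  finally show ?case using insert by simp
qed

context gr begin

abbreviation "CH \<equiv> characters V E r s"

lemma CH_iff: "\<rho> \<in> CH \<longleftrightarrow> \<rho> \<in> extensional A \<and>
     (\<forall>S\<in>A. \<forall>T\<in>A. \<rho> (\<lambda>f u. S f u + T f u) = \<rho> S + \<rho> T) \<and>
     (\<forall>c. \<forall>T\<in>A. \<rho> (\<lambda>f u. c * T f u) = c * \<rho> T) \<and>
     (\<forall>S\<in>A. \<forall>T\<in>A. \<rho> (S \<circ> T) = \<rho> S * \<rho> T) \<and>
     (\<exists>T\<in>A. \<rho> T \<noteq> 0)"
  unfolding characters_def Let_def by simp

lemma ch_add: "\<rho> \<in> CH \<Longrightarrow> S \<in> A \<Longrightarrow> T \<in> A \<Longrightarrow> \<rho> (\<lambda>f u. S f u + T f u) = \<rho> S + \<rho> T"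
  unfolding CH_iff by blast
lemma ch_smult: "\<rho> \<in> CH \<Longrightarrow> T \<in> A \<Longrightarrow> \<rho> (\<lambda>f u. c * T f u) = c * \<rho> T"
  unfolding CH_iff by blast
lemma ch_mult: "\<rho> \<in> CH \<Longrightarrow> S \<in> A \<Longrightarrow> T \<in> A \<Longrightarrow> \<rho> (S \<circ> T) = \<rho> S * \<rho> T"
  unfolding CH_iff by blast
lemma ch_ext: "\<rho> \<in> CH \<Longrightarrow> \<rho> \<in> extensional A"
  unfolding CH_iff by blast

lemma ch_diff: assumes "\<rho> \<in> CH" "S \<in> A" "T \<in> A"
  shows "(\<lambda>f u. S f u + (-1) * T f u) \<in> A" "\<rho> (\<lambda>f u. S f u + (-1) * T f u) = \<rho> S - \<rho> T"
proof -
  have TA: "(\<lambda>f u. (-1) * T f u) \<in> A" using A_smult[OF assms(3)] .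
  show "(\<lambda>f u. S f u + (-1) * T f u) \<in> A" using A_add[OF assms(2) TA] by simp
  have "\<rho> (\<lambda>f u. S f u + (\<lambda>f u. (-1) * T f u) f u) = \<rho> S + \<rho> (\<lambda>f u. (-1) * T f u)"
    by (rule ch_add[OF assms(1,2) TA])
  then show "\<rho> (\<lambda>f u. S f u + (-1) * T f u) = \<rho> S - \<rho> T"
    using ch_smult[OF assms(1,3), of "-1"] by simp
qed

lemma gop_sum:
  fixes N :: nat
  assumes "gop U" "\<And>k. g k \<in> H"
  shows "U (\<lambda>u. \<Sum>k<N. g k u) = (\<lambda>u. \<Sum>k<N. U (g k) u)"
proof (induction N)
  case 0 then show ?case using gop_zero[OF assms(1)] by simp
next
  case (Suc N)
  have hs: "(\<lambda>u. \<Sum>k<N. g k u) \<in> H"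
    using assms(2) unfolding H_iff by (auto intro!: sqs_sum)
  have "U (\<lambda>u. \<Sum>k<Suc N. g k u) = U (\<lambda>u. (\<lambda>u. \<Sum>k<N. g k u) u + g N u)" by simp
  also have "\<dots> = (\<lambda>u. U (\<lambda>u. \<Sum>k<N. g k u) u + U (g N) u)"
    by (rule gop_add[OF assms(1) hs assms(2)])
  also have "\<dots> = (\<lambda>u. \<Sum>k<Suc N. U (g k) u)" using Suc by simp
  finally show ?case .
qed

lemma ch_bound:
  assumes rho: "\<rho> \<in> CH" and T: "T \<in> A" and C: "C \<ge> 0" "\<And>f. f \<in> H \<Longrightarrow> l2norm (T f) \<le> C * l2norm f"
  shows "cmod (\<rho> T) \<le> C"
proof (rule ccontr)
  assume "\<not> cmod (\<rho> T) \<le> C"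
  hence gt: "cmod (\<rho> T) > C" by simp
  define a where "a = \<rho> T"
  have a0: "a \<noteq> 0" using gt C by (auto simp: a_def)
  define U where "U = (\<lambda>f u. (1/a) * T f u)"
  have UA: "U \<in> A" unfolding U_def by (rule A_smult[OF T])
  have rU: "\<rho> U = 1" unfolding U_def using ch_smult[OF rho T, of "1/a"] a0 by (simp add: a_def)
  define c where "c = C / cmod a"
  have c0: "c \<ge> 0" using C by (simp add: c_def)
  have c1: "c < 1" using gt a0 by (simp add: c_def a_def)
  have Ub: "l2norm (U f) \<le> c * l2norm f" if "f \<in> H" for f
  proof -
    have "l2norm (U f) = cmod (1/a) * l2norm (T f)" unfolding U_def by (rule l2norm_cmult)
    also have "\<dots> \<le> cmod (1/a) * (C * l2norm f)" using C that by (intro mult_left_mono) auto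
    also have "\<dots> = c * l2norm f" by (simp add: c_def norm_divide)
    finally show ?thesis .
  qed
  have gU: "gop U" using A_gop[OF UA] .
  define W where "W k = U ^^ Suc k" for k
  have W0: "W 0 = U" by (simp add: W_def)
  have WS: "W (Suc k) = U \<circ> W k" for k by (simp add: W_def)
  have WA: "W k \<in> A" for k by (induction k) (simp_all only: W0 WS UA A_comp)
  have WH: "W k f \<in> H" if "f \<in> H" for f k using A_H[OF WA that] .
  have Woff: "W k f = (\<lambda>u. 0)" if "f \<notin> H" for f k using A_off[OF WA that] .
  have Wb: "l2norm (W k f) \<le> c^Suc k * l2norm f" if f: "f \<in> H" for f k
  proof (induction k)
    case 0 then show ?case using Ub[OF f] by (simp add: W0)
  next
    case (Suc k)
    have "l2norm (W (Suc k) f) = l2norm (U (W k f))" by (simp add: WS)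
    also have "\<dots> \<le> c * l2norm (W k f)" using Ub WH[OF f] by blast
    also have "\<dots> \<le> c * (c^Suc k * l2norm f)" using Suc c0 by (intro mult_left_mono) auto
    finally show ?case by (simp add: mult.assoc)
  qed
  have Wpt: "cmod (W k f u) \<le> c^Suc k * l2norm f" if "f \<in> H" for f k u
    using pointwise_le[OF H_sqs[OF WH[OF that, of k]], of u] Wb[OF that, of k] by linarith
  have summ: "summable (\<lambda>k. W k f u)" if f: "f \<in> H" for f u
  proof (rule summable_comparison_test[where g = "\<lambda>k. c^Suc k * l2norm f"])
    show "\<exists>N. \<forall>n\<ge>N. cmod (W n f u) \<le> c ^ Suc n * l2norm f" using Wpt[OF f] by blast
    have "summable (\<lambda>k. (c * l2norm f) * c^k)"
      using c0 c1 by (intro summable_mult summable_geometric) simp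
    then show "summable (\<lambda>k. c^Suc k * l2norm f)" by (simp add: mult_ac)
  qed
  define Sop where "Sop = (\<lambda>f u. \<Sum>k. W k f u)"
  define SN where "SN = (\<lambda>N f u. \<Sum>k<N. W k f u)"
  have SNA: "SN N \<in> A" for N
  proof (induction N)
    case 0
    have "SN 0 = (\<lambda>f u. 0 * U f u)" by (simp add: SN_def)
    then show ?case using A_smult[OF UA, of 0] by simp
  next
    case (Suc N)
    have "SN (Suc N) = (\<lambda>f u. SN N f u + W N f u)" by (simp add: SN_def)
    then show ?case using A_add[OF Suc WA[of N]] by simp
  qed
  have SNH: "SN N f \<in> H" if "f \<in> H" for N f using A_H[OF SNA that] .
  have geo: "(\<Sum>k<M. c ^ Suc (k + N)) \<le> c^N / (1 - c)" for M N
  proof -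
    have "(\<Sum>k<M. c ^ Suc (k + N)) \<le> (\<Sum>k<M. c^N * c^k)"
    proof (rule sum_mono)
      fix k
      have "c ^ Suc (k + N) = c * (c^N * c^k)" by (simp add: power_add mult_ac)
      also have "\<dots> \<le> 1 * (c^N * c^k)" using c0 c1 by (intro mult_right_mono) auto
      finally show "c ^ Suc (k + N) \<le> c^N * c^k" by simp
    qed
    also have "\<dots> = c^N * ((1 - c^M) / (1 - c))"
      using c1 by (simp add: sum_distrib_left[symmetric] sum_gp_strict)
    also have "\<dots> \<le> c^N * (1 / (1 - c))"
      using c0 c1 by (intro mult_left_mono divide_right_mono) auto
    finally show ?thesis by simp
  qed
  have tail: "sqs (\<lambda>u. Sop f u - SN N f u) \<and> l2norm (\<lambda>u. Sop f u - SN N f u) \<le> c^N / (1 - c) * l2norm f"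
    if f: "f \<in> H" for f N
  proof -
    define g where "g = (\<lambda>M u. \<Sum>k<M. W (k + N) f u)"
    have lim: "(\<lambda>M. g M u) \<longlonglongrightarrow> Sop f u - SN N f u" for u
    proof -
      have "Sop f u = (\<Sum>k. W (k + N) f u) + SN N f u"
        unfolding Sop_def SN_def by (rule suminf_split_initial_segment[OF summ[OF f]])
      moreover have "(\<lambda>M. g M u) \<longlonglongrightarrow> (\<Sum>k. W (k + N) f u)"
        unfolding g_def by (rule summable_LIMSEQ[OF summable_ignore_initial_segment[OF summ[OF f]]])
      ultimately show ?thesis by simp
    qed
    have bd: "sqs (g M) \<and> l2norm (g M) \<le> c^N / (1 - c) * l2norm f" for M
    proof
      have s: "\<And>k. sqs (W (k + N) f)" using H_sqs[OF WH[OF f]] by blast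
      show "sqs (g M)" unfolding g_def by (rule sqs_sum) (use s in auto)
      have "l2norm (g M) \<le> (\<Sum>k<M. l2norm (W (k + N) f))"
        unfolding g_def by (rule l2norm_sum) (use s in auto)
      also have "\<dots> \<le> (\<Sum>k<M. c ^ Suc (k + N) * l2norm f)"
        by (intro sum_mono Wb[OF f])
      also have "\<dots> = (\<Sum>k<M. c ^ Suc (k + N)) * l2norm f" by (simp add: sum_distrib_right)
      also have "\<dots> \<le> c^N / (1 - c) * l2norm f"
        by (intro mult_right_mono geo l2norm_nonneg)
      finally show "l2norm (g M) \<le> c^N / (1 - c) * l2norm f" .
    qed
    have "sqs (\<lambda>u. Sop f u - SN N f u)" "l2norm (\<lambda>u. Sop f u - SN N f u) \<le> c^N / (1 - c) * l2norm f"
      using l2_lsc[where g = g and h = "\<lambda>u. Sop f u - SN N f u" and N = 0 and B = "c^N / (1 - c) * l2norm f"] lim bd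
      by blast+
    then show ?thesis by blast
  qed
  have SopH: "Sop f \<in> H" if f: "f \<in> H" for f
  proof -
    have "sqs (\<lambda>u. Sop f u - SN 0 f u)" using tail[OF f, of 0] by blast
    then have "sqs (Sop f)" by (simp add: SN_def)
    moreover have "Sop f u = 0" if "\<not> vp u" for u
    proof -
      have "W k f u = 0" for k using WH[OF f, of k] that unfolding H_iff by blast
      then show ?thesis by (simp add: Sop_def)
    qed
    ultimately show ?thesis unfolding H_iff by blast
  qed
  have Sopoff: "Sop f = (\<lambda>u. 0)" if "f \<notin> H" for f
    using Woff[OF that] by (simp add: Sop_def)
  have SopA: "Sop \<in> A"
    unfolding A_iff
  proof (intro conjI allI impI ballI)
    show "\<And>f. f \<notin> H \<Longrightarrow> Sop f = (\<lambda>u. 0)" using Sopoff by blast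
    show "\<And>f. f \<in> H \<Longrightarrow> Sop f \<in> H" using SopH by blast
    fix \<epsilon> :: real assume e: "\<epsilon> > 0"
    have "\<epsilon> / 2 * (1 - c) > 0" using e c1 by simp
    then obtain N where N: "c^N < \<epsilon> / 2 * (1 - c)" using real_arch_pow_inv c1 by blast
    have N': "c^N / (1 - c) \<le> \<epsilon> / 2" using N c1 by (simp add: field_simps)
    have e2: "\<epsilon> / 2 > 0" using e by simp
    obtain p where p: "p \<in> TP" "\<forall>h\<in>H. l2norm (\<lambda>u. SN N h u - p h u) \<le> \<epsilon> / 2 * l2norm h"
      using A_approx[OF SNA e2] by blast
    show "\<exists>p\<in>TP. \<forall>f\<in>H. l2norm (\<lambda>u. Sop f u - p f u) \<le> \<epsilon> * l2norm f"
    proof (intro bexI[OF _ p(1)] ballI)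
      fix f assume f: "f \<in> H"
      have "l2norm (\<lambda>u. Sop f u - p f u) \<le> l2norm (\<lambda>u. Sop f u - SN N f u) + l2norm (\<lambda>u. SN N f u - p f u)"
        by (intro l2norm_triangle_diff H_sqs SopH[OF f] SNH[OF f] gop_H[OF gop_TP[OF p(1)] f])
      also have "\<dots> \<le> c^N / (1 - c) * l2norm f + \<epsilon> / 2 * l2norm f"
        using tail[OF f, of N] p(2) f by (intro add_mono) auto
      also have "\<dots> \<le> \<epsilon> / 2 * l2norm f + \<epsilon> / 2 * l2norm f"
        using N' l2norm_nonneg[of f] by (intro add_mono mult_right_mono) auto
      finally show "l2norm (\<lambda>u. Sop f u - p f u) \<le> \<epsilon> * l2norm f" by simp
    qed
  qed
  have rel: "U (Sop f) = (\<lambda>u. Sop f u - U f u)" if f: "f \<in> H" for f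
  proof
    fix u
    have l1: "(\<lambda>N. U (SN N f) u) \<longlonglongrightarrow> U (Sop f) u"
    proof -
      have "((\<lambda>N. U (Sop f) u - U (SN N f) u) \<longlongrightarrow> 0) sequentially"
      proof (rule Lim_null_comparison)
        show "\<forall>\<^sub>F N in sequentially. norm (U (Sop f) u - U (SN N f) u) \<le> c * (c^N / (1 - c) * l2norm f)"
        proof (intro always_eventually allI)
          fix N
          have tH: "(\<lambda>u. Sop f u - SN N f u) \<in> H" using H_minus[OF SopH[OF f] SNH[OF f]] .
          have "U (Sop f) u - U (SN N f) u = U (\<lambda>u. Sop f u - SN N f u) u"
            using gop_minus[OF gU SopH[OF f] SNH[OF f]] by simp
          then have "norm (U (Sop f) u - U (SN N f) u) \<le> l2norm (U (\<lambda>u. Sop f u - SN N f u))"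
            using pointwise_le[OF H_sqs[OF gop_H[OF gU tH]], of u] by simp
          also have "\<dots> \<le> c * l2norm (\<lambda>u. Sop f u - SN N f u)" using Ub[OF tH] .
          also have "\<dots> \<le> c * (c^N / (1 - c) * l2norm f)"
            using tail[OF f, of N] c0 by (intro mult_left_mono) auto
          finally show "norm (U (Sop f) u - U (SN N f) u) \<le> c * (c^N / (1 - c) * l2norm f)" .
        qed
        have "(\<lambda>N. c * (c^N / (1 - c) * l2norm f)) \<longlonglongrightarrow> c * (0 / (1 - c) * l2norm f)"
          using c0 c1 by (intro tendsto_intros) auto
        then show "(\<lambda>N. c * (c^N / (1 - c) * l2norm f)) \<longlonglongrightarrow> 0" by simp
      qed
      then have "(\<lambda>N. U (Sop f) u - (U (Sop f) u - U (SN N f) u)) \<longlonglongrightarrow> U (Sop f) u - 0"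
        by (intro tendsto_diff tendsto_const)
      then show ?thesis by simp
    qed
    have eqN: "U (SN N f) u = (\<Sum>k<N. W (Suc k) f u)" for N
    proof -
      have "U (SN N f) = (\<lambda>u. \<Sum>k<N. U (W k f) u)"
        unfolding SN_def by (rule gop_sum[OF gU WH[OF f]])
      then show ?thesis by (simp add: WS)
    qed
    have l2: "(\<lambda>N. U (SN N f) u) \<longlonglongrightarrow> Sop f u - U f u"
    proof -
      have sS: "summable (\<lambda>k. W (Suc k) f u)"
        using summable_ignore_initial_segment[OF summ[OF f], of 1] by simp
      have "(\<Sum>k. W (Suc k) f u) = Sop f u - W 0 f u"
        unfolding Sop_def by (rule suminf_split_head[OF summ[OF f]])
      then show ?thesis using summable_LIMSEQ[OF sS] unfolding eqN by (simp add: W0)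
    qed
    show "U (Sop f) u = Sop f u - U f u" using LIMSEQ_unique[OF l1 l2] .
  qed
  have Seq: "Sop = (\<lambda>f u. U f u + (U \<circ> Sop) f u)"
  proof (intro ext)
    fix f u
    show "Sop f u = U f u + (U \<circ> Sop) f u"
    proof (cases "f \<in> H")
      case True then show ?thesis using rel[OF True] by simp
    next
      case False then show ?thesis
        using Sopoff[OF False] gop_off[OF gU False] gop_zero[OF gU] by simp
    qed
  qed
  have "\<rho> Sop = \<rho> U + \<rho> (U \<circ> Sop)"
    using ch_add[OF rho UA A_comp[OF UA SopA]] Seq by metis
  also have "\<dots> = 1 + \<rho> Sop" using ch_mult[OF rho UA SopA] rU by simp
  finally show False by simp
qed

lemma ch_cont:
  assumes rho: "\<rho> \<in> CH" and T: "T \<in> A" and p: "p \<in> TP"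
    and e: "\<epsilon> \<ge> 0" "\<And>f. f \<in> H \<Longrightarrow> l2norm (\<lambda>u. T f u - p f u) \<le> \<epsilon> * l2norm f"
  shows "cmod (\<rho> T - \<rho> p) \<le> \<epsilon>"
proof -
  have pA: "p \<in> A" using TP_A[OF p] .
  have "cmod (\<rho> (\<lambda>f u. T f u + (-1) * p f u)) \<le> \<epsilon>"
  proof (rule ch_bound[OF rho ch_diff(1)[OF rho T pA] e(1)])
    fix f assume "f \<in> H"
    then show "l2norm (\<lambda>u. T f u + (-1) * p f u) \<le> \<epsilon> * l2norm f" using e(2) by simp
  qed
  then show ?thesis using ch_diff(2)[OF rho T pA] by simp
qed

end


lemma cmod_sum_single:
  fixes a :: "nat \<Rightarrow> complex"
  assumes "finite I" "\<And>i j. i \<in> I \<Longrightarrow> j \<in> I \<Longrightarrow> i \<noteq> j \<Longrightarrow> a i = 0 \<or> a j = 0"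
  shows "(cmod (\<Sum>i\<in>I. a i))\<^sup>2 = (\<Sum>i\<in>I. (cmod (a i))\<^sup>2)"
proof (cases "\<exists>i\<in>I. a i \<noteq> 0")
  case False then show ?thesis by simp
next
  case True
  then obtain i where i: "i \<in> I" "a i \<noteq> 0" by blast
  have z: "a j = 0" if "j \<in> I - {i}" for j using assms(2)[of i j] i that by auto
  have "(\<Sum>i\<in>I. a i) = a i" using sum.remove[OF assms(1) i(1), of a] z by (simp add: sum.neutral)
  moreover have "(\<Sum>i\<in>I. (cmod (a i))\<^sup>2) = (cmod (a i))\<^sup>2"
    using sum.remove[OF assms(1) i(1), of "\<lambda>i. (cmod (a i))\<^sup>2"] z by (simp add: sum.neutral)
  ultimately show ?thesis by simp
qed

context gr begin

lemma vp_cons: "vp (Edges (e # es)) \<longleftrightarrow> e \<in> E \<and> (es = [] \<or> (vp (Edges es) \<and> s e = r (hd es)))"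
proof
  assume v: "vp (Edges (e # es))"
  then have a: "e \<in> E" "set es \<subseteq> E" "\<And>i. Suc i < length (e # es) \<Longrightarrow> s ((e # es) ! i) = r ((e # es) ! Suc i)"
    by (auto simp: valid_path_def)
  show "e \<in> E \<and> (es = [] \<or> (vp (Edges es) \<and> s e = r (hd es)))"
  proof (cases es)
    case Nil then show ?thesis using a by simp
  next
    case (Cons e2 es2)
    have "s e = r (hd es)" using a(3)[of 0] Cons by simp
    moreover have "vp (Edges es)" unfolding valid_path_def using a Cons
      by (auto simp del: nth_Cons_Suc) (metis Suc_less_eq length_Cons nth_Cons_Suc)
    ultimately show ?thesis using a by simp
  qed
next
  assume a: "e \<in> E \<and> (es = [] \<or> (vp (Edges es) \<and> s e = r (hd es)))"
  show "vp (Edges (e # es))"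
  proof (cases es)
    case Nil then show ?thesis using a by (simp add: valid_path_def)
  next
    case (Cons e2 es2)
    then have b: "vp (Edges es)" "s e = r (hd es)" using a by auto
    then have c: "set es \<subseteq> E" "\<And>i. Suc i < length es \<Longrightarrow> s (es ! i) = r (es ! Suc i)"
      by (auto simp: valid_path_def)
    have "s ((e # es) ! i) = r ((e # es) ! Suc i)" if "Suc i < length (e # es)" for i
    proof (cases i)
      case 0 then show ?thesis using b Cons by simp
    next
      case (Suc j) then show ?thesis using c(2)[of j] that by simp
    qed
    then show ?thesis using a c(1) by (auto simp: valid_path_def)
  qed
qed

definition tailp :: "'e \<Rightarrow> 'e list \<Rightarrow> ('v,'e) gpath" where
  "tailp e es = (if es = [] then Vtx (s e) else Edges es)"

lemma vp_tail: assumes "vp (Edges (e # es))" shows "vp (tailp e es)" "prange r (tailp e es) = s e"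
  using assms edges_in unfolding vp_cons tailp_def by (auto simp: valid_path_def)

lemma L_apply': "f \<in> H \<Longrightarrow> L e f u = (case u of Edges (e' # es) \<Rightarrow>
   (if e' = e \<and> vp u then f (tailp e es) else 0) | _ \<Rightarrow> 0)"
  by (auto simp: L_apply tailp_def split: gpath.split list.split)

lemma L_nz: "L e f u \<noteq> 0 \<Longrightarrow> \<exists>es. u = Edges (e # es) \<and> vp u"
  by (cases "f \<in> H") (auto simp: L_apply' L_off split: gpath.splits list.splits if_splits)

lemma L_norm: assumes f: "f \<in> H" shows "l2norm (L e f) \<le> l2norm f"
proof -
  define h where "h u = (case u of Edges (e' # es) \<Rightarrow> (if es = [] then Vtx (s e) else Edges es) | _ \<Rightarrow> u)" for u :: "('v,'e) gpath"
  have nz: "\<exists>es. u = Edges (e # es)" if "L e f u \<noteq> 0" for u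
    using that by (auto simp: L_apply[OF f] split: gpath.splits list.splits if_splits)
  have inj: "inj_on h {u. L e f u \<noteq> 0}"
  proof (rule inj_onI)
    fix u1 u2 assume "u1 \<in> {u. L e f u \<noteq> 0}" "u2 \<in> {u. L e f u \<noteq> 0}" "h u1 = h u2"
    then obtain es1 es2 where "u1 = Edges (e # es1)" "u2 = Edges (e # es2)" "h u1 = h u2"
      using nz by blast
    then show "u1 = u2" by (auto simp: h_def split: if_splits)
  qed
  have eq: "cmod (L e f u) \<le> cmod (f (h u))" if "L e f u \<noteq> 0" for u
    using that nz[OF that] by (auto simp: L_apply[OF f] h_def)
  show ?thesis using inj_bound[OF H_sqs[OF f] inj eq] by auto
qed

lemma PP_zero: assumes "v \<noteq> w" shows "P v \<circ> P w = (\<lambda>f u. 0 * P w f u)"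
proof (intro ext)
  fix f u
  show "(P v \<circ> P w) f u = 0 * P w f u"
  proof (cases "f \<in> H")
    case True
    then show ?thesis using gop_H[OF gop_P True] assms by (simp add: P_apply)
  next
    case False
    then show ?thesis using gop_zero[OF gop_P] by (simp add: P_off)
  qed
qed

lemma PL_eq: "P (r e) \<circ> L e = L e"
proof (intro ext)
  fix f u
  show "(P (r e) \<circ> L e) f u = L e f u"
  proof (cases "f \<in> H")
    case True
    show ?thesis
    proof (cases "L e f u = 0")
      case True then show ?thesis using gop_H[OF gop_L \<open>f \<in> H\<close>] by (simp add: P_apply)
    next
      case False
      then obtain es where "u = Edges (e # es)" "vp u" using L_nz by blast
      then show ?thesis using gop_H[OF gop_L \<open>f \<in> H\<close>] by (simp add: P_apply)
    qed
  next
    case False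
    then show ?thesis using gop_zero[OF gop_P] by (simp add: L_off)
  qed
qed

lemma LP_eq: "L e \<circ> P (s e) = L e"
proof (intro ext)
  fix f u
  show "(L e \<circ> P (s e)) f u = L e f u"
  proof (cases "f \<in> H")
    case True
    have PH: "P (s e) f \<in> H" using gop_H[OF gop_P True] .
    show ?thesis
    proof (cases "\<exists>es. u = Edges (e # es) \<and> vp u")
      case True
      then obtain es where u: "u = Edges (e # es)" "vp u" by blast
      then show ?thesis using vp_tail[of e es] PH \<open>f \<in> H\<close>
        by (simp add: L_apply' P_apply)
    next
      case False
      then have "L e f u = 0" "L e (P (s e) f) u = 0" using L_nz by blast+
      then show ?thesis by simp
    qed
  next
    case False
    then show ?thesis using gop_zero[OF gop_L] by (simp add: L_off P_off)
  qed
qed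

end

locale gx = gr V E r s for V :: "'v set" and E :: "'e set" and r s :: "'e \<Rightarrow> 'v" +
  fixes x :: 'v and n :: nat and ee :: "nat \<Rightarrow> 'e"
  assumes xV: "x \<in> V"
    and bij: "bij_betw ee {..<n} {e \<in> E. s e = x \<and> r e = x}"
begin

abbreviation "CHx \<equiv> characters_at V E r s x"

lemma CHx_iff: "\<rho> \<in> CHx \<longleftrightarrow> \<rho> \<in> CH \<and> \<rho> (P x) = 1"
  by (simp add: characters_at_def)

lemma ee_E: "i < n \<Longrightarrow> ee i \<in> E" "i < n \<Longrightarrow> s (ee i) = x" "i < n \<Longrightarrow> r (ee i) = x"
  using bij by (auto simp: bij_betw_def)

lemma ee_inj: "i < n \<Longrightarrow> j < n \<Longrightarrow> ee i = ee j \<Longrightarrow> i = j"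
  using bij by (auto simp: bij_betw_def inj_on_def)

lemma loop_ee: "e \<in> E \<Longrightarrow> s e = x \<Longrightarrow> r e = x \<Longrightarrow> \<exists>i<n. e = ee i"
  using bij by (auto simp: bij_betw_def)

lemma chx_P: assumes rho: "\<rho> \<in> CHx" and v: "v \<in> V" shows "\<rho> (P v) = (if v = x then 1 else 0)"
proof (cases "v = x")
  case True then show ?thesis using rho by (simp add: CHx_iff)
next
  case False
  have r: "\<rho> \<in> CH" "\<rho> (P x) = 1" using rho by (auto simp: CHx_iff)
  have "\<rho> (P v) * \<rho> (P x) = \<rho> (P v \<circ> P x)" using ch_mult[OF r(1) P_A[OF v] P_A[OF xV]] by simp
  also have "\<dots> = 0" unfolding PP_zero[OF False] using ch_smult[OF r(1) P_A[OF xV], of 0] by simp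
  finally show ?thesis using r(2) False by simp
qed

lemma chx_L: assumes rho: "\<rho> \<in> CHx" and e: "e \<in> E" "\<not> (s e = x \<and> r e = x)" shows "\<rho> (L e) = 0"
proof -
  have r: "\<rho> \<in> CH" using rho by (simp add: CHx_iff)
  have rs: "r e \<in> V" "s e \<in> V" using edges_in[OF e(1)] by auto
  show ?thesis
  proof (cases "r e = x")
    case False
    have "\<rho> (L e) = \<rho> (P (r e) \<circ> L e)" by (simp add: PL_eq)
    also have "\<dots> = \<rho> (P (r e)) * \<rho> (L e)" using ch_mult[OF r P_A[OF rs(1)] L_A[OF e(1)]] .
    also have "\<dots> = 0" using chx_P[OF rho rs(1)] False by simp
    finally show ?thesis .
  next
    case True
    then have F: "s e \<noteq> x" using e by simp
    have "\<rho> (L e) = \<rho> (L e \<circ> P (s e))" by (simp add: LP_eq)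
    also have "\<dots> = \<rho> (L e) * \<rho> (P (s e))" using ch_mult[OF r L_A[OF e(1)] P_A[OF rs(2)]] .
    also have "\<dots> = 0" using chx_P[OF rho rs(2)] F by simp
    finally show ?thesis .
  qed
qed

lemma chx_unique:
  assumes rho: "\<rho> \<in> CHx" and sig: "\<sigma> \<in> CHx" and eq: "\<And>i. i < n \<Longrightarrow> \<rho> (L (ee i)) = \<sigma> (L (ee i))"
  shows "\<rho> = \<sigma>"
proof -
  have r: "\<rho> \<in> CH" and sg: "\<sigma> \<in> CH" using rho sig by (auto simp: CHx_iff)
  have tp: "\<rho> p = \<sigma> p" if "p \<in> TP" for p
    using that
  proof (induction rule: tpoly.induct)
    case (gen_L e)
    show ?case
    proof (cases "s e = x \<and> r e = x")
      case True
      then obtain i where "i < n" "e = ee i" using loop_ee gen_L by blast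
      then show ?thesis using eq by simp
    next
      case False then show ?thesis using chx_L[OF rho gen_L] chx_L[OF sig gen_L] by simp
    qed
  next
    case (gen_P v) then show ?case using chx_P[OF rho] chx_P[OF sig] by simp
  next
    case (add p q) then show ?case using ch_add[OF r TP_A TP_A] ch_add[OF sg TP_A TP_A] by simp
  next
    case (smult p c) then show ?case using ch_smult[OF r TP_A] ch_smult[OF sg TP_A] by simp
  next
    case (mult p q) then show ?case
      using ch_mult[OF r TP_A[of p] TP_A[of q]] ch_mult[OF sg TP_A[of p] TP_A[of q]] by (simp add: comp_def)
  qed
  show ?thesis
  proof (rule extensionalityI[OF ch_ext[OF r] ch_ext[OF sg]])
    fix T assume T: "T \<in> A"
    have "cmod (\<rho> T - \<sigma> T) \<le> 0"
    proof (rule le_eps[of 2])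
      fix \<epsilon> :: real assume e: "\<epsilon> > 0"
      obtain p where p: "p \<in> TP" "\<forall>f\<in>H. l2norm (\<lambda>u. T f u - p f u) \<le> \<epsilon> * l2norm f"
        using A_approx[OF T e] by blast
      have "cmod (\<rho> T - \<rho> p) \<le> \<epsilon>" using ch_cont[OF r T p(1)] e p(2) by simp
      moreover have "cmod (\<sigma> T - \<sigma> p) \<le> \<epsilon>" using ch_cont[OF sg T p(1)] e p(2) by simp
      moreover have "\<rho> T - \<sigma> T = (\<rho> T - \<rho> p) - (\<sigma> T - \<sigma> p)" using tp[OF p(1)] by simp
      ultimately show "cmod (\<rho> T - \<sigma> T) \<le> \<epsilon> * 2"
        by (metis mult_2_right norm_triangle_le_diff add_mono)
    qed simp
    then show "\<rho> T = \<sigma> T" by simp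
  qed
qed

lemma chx_ball:
  assumes rho: "\<rho> \<in> CHx"
  shows "(\<Sum>i<n. (cmod (\<rho> (L (ee i))))\<^sup>2) \<le> 1"
proof -
  have r: "\<rho> \<in> CH" using rho by (simp add: CHx_iff)
  define lam where "lam i = \<rho> (L (ee i))" for i
  define T where "T k = (\<lambda>f u. \<Sum>i<k. cnj (lam i) * L (ee i) f u)" for k
  have TA: "k \<le> n \<Longrightarrow> T k \<in> A \<and> \<rho> (T k) = (\<Sum>i<k. cnj (lam i) * lam i)" for k
  proof (induction k)
    case 0
    obtain T0 where T0: "T0 \<in> A" using r unfolding CH_iff by blast
    have "T 0 = (\<lambda>f u. 0 * T0 f u)" by (simp add: T_def)
    then show ?case using A_smult[OF T0, of 0] ch_smult[OF r T0, of 0] by simp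
  next
    case (Suc k)
    then have k: "k < n" by simp
    have LA: "(\<lambda>f u. cnj (lam k) * L (ee k) f u) \<in> A" using A_smult[OF L_A[OF ee_E(1)[OF k]]] .
    have IH: "T k \<in> A" "\<rho> (T k) = (\<Sum>i<k. cnj (lam i) * lam i)" using Suc by auto
    have eq: "T (Suc k) = (\<lambda>f u. T k f u + (\<lambda>f u. cnj (lam k) * L (ee k) f u) f u)"
      by (simp add: T_def)
    show ?case
      unfolding eq using A_add[OF IH(1) LA] ch_add[OF r IH(1) LA] IH(2)
        ch_smult[OF r L_A[OF ee_E(1)[OF k]]] by (simp add: lam_def)
  qed
  define Q where "Q = (\<Sum>i<n. (cmod (lam i))\<^sup>2)"
  have Q0: "Q \<ge> 0" by (simp add: Q_def sum_nonneg)
  have bound: "l2norm (T n f) \<le> sqrt Q * l2norm f" if f: "f \<in> H" for f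
  proof (rule sqs_bound(2))
    show "0 \<le> sqrt Q * l2norm f" using Q0 by (simp add: l2norm_nonneg)
    fix F :: "('v,'e) gpath set" assume F: "finite F"
    have pt: "(cmod (T n f u))\<^sup>2 = (\<Sum>i<n. (cmod (lam i))\<^sup>2 * (cmod (L (ee i) f u))\<^sup>2)" for u
    proof -
      have "(cmod (T n f u))\<^sup>2 = (\<Sum>i<n. (cmod (cnj (lam i) * L (ee i) f u))\<^sup>2)"
        unfolding T_def
      proof (rule cmod_sum_single)
        fix i j assume ij: "i \<in> {..<n}" "j \<in> {..<n}" "i \<noteq> j"
        show "cnj (lam i) * L (ee i) f u = 0 \<or> cnj (lam j) * L (ee j) f u = 0"
        proof (rule ccontr)
          assume "\<not> ?thesis"
          then have "L (ee i) f u \<noteq> 0" "L (ee j) f u \<noteq> 0" by auto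
          then obtain es1 es2 where "u = Edges (ee i # es1)" "u = Edges (ee j # es2)"
            using L_nz by metis
          then have "ee i = ee j" by simp
          then show False using ee_inj ij by auto
        qed
      qed simp
      then show ?thesis by (simp add: norm_mult power_mult_distrib)
    qed
    have "(\<Sum>u\<in>F. (cmod (T n f u))\<^sup>2) = (\<Sum>i<n. (cmod (lam i))\<^sup>2 * (\<Sum>u\<in>F. (cmod (L (ee i) f u))\<^sup>2))"
      unfolding pt by (simp add: sum.swap[of _ F] sum_distrib_left)
    also have "\<dots> \<le> (\<Sum>i<n. (cmod (lam i))\<^sup>2 * (l2norm f)\<^sup>2)"
    proof (intro sum_mono mult_left_mono)
      fix i
      have LH: "L (ee i) f \<in> H" using gop_H[OF gop_L f] .
      have "(\<Sum>u\<in>F. (cmod (L (ee i) f u))\<^sup>2) \<le> (l2norm (L (ee i) f))\<^sup>2"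
        using finite_le_nsq[OF H_sqs[OF LH] F] l2norm_sq[of "L (ee i) f"] by simp
      also have "\<dots> \<le> (l2norm f)\<^sup>2"
      proof -
        have "l2norm (L (ee i) f) \<le> l2norm f" using L_norm[OF f] .
        then show ?thesis by (intro power_mono) (auto simp: l2norm_nonneg)
      qed
      finally show "(\<Sum>u\<in>F. (cmod (L (ee i) f u))\<^sup>2) \<le> (l2norm f)\<^sup>2" .
    qed simp
    also have "\<dots> = (sqrt Q * l2norm f)\<^sup>2" using Q0 by (simp add: Q_def sum_distrib_right power_mult_distrib)
    finally show "(\<Sum>u\<in>F. (cmod (T n f u))\<^sup>2) \<le> (sqrt Q * l2norm f)\<^sup>2" .
  qed
  have "cmod (\<rho> (T n)) \<le> sqrt Q"
    using ch_bound[OF r conjunct1[OF TA[OF order_refl]] real_sqrt_ge_zero[OF Q0] bound] .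
  moreover have "\<rho> (T n) = of_real Q"
  proof -
    have c: "cnj (lam i) * lam i = complex_of_real ((cmod (lam i))\<^sup>2)" for i
      using complex_norm_square[of "lam i"] by (simp only: mult.commute)
    have "\<rho> (T n) = (\<Sum>i<n. cnj (lam i) * lam i)" using TA[OF order_refl] by blast
    also have "\<dots> = (\<Sum>i<n. complex_of_real ((cmod (lam i))\<^sup>2))" by (simp only: c)
    also have "\<dots> = of_real Q" by (simp only: Q_def of_real_sum)
    finally show ?thesis .
  qed
  ultimately have "Q \<le> sqrt Q" using Q0 by simp
  then have "sqrt Q \<le> 1"
  proof -
    assume QQ: "Q \<le> sqrt Q"
    show ?thesis
    proof (rule ccontr)
      assume "\<not> sqrt Q \<le> 1" then have "sqrt Q > 1" by simp
      then have "sqrt Q * 1 < sqrt Q * sqrt Q" by (intro mult_strict_left_mono) auto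
      then show False using QQ Q0 by simp
    qed
  qed
  then have "Q \<le> 1" by simp
  then show ?thesis by (simp add: Q_def lam_def)
qed

end


lemma sum_lists_prod:
  fixes g :: "'a \<Rightarrow> real"
  assumes "finite A"
  shows "(\<Sum>es\<in>{xs. set xs \<subseteq> A \<and> length xs = k}. prod_list (map g es)) = (\<Sum>a\<in>A. g a)^k"
proof (induction k)
  case 0
  have "{xs. set xs \<subseteq> A \<and> length xs = 0} = {[]}" by auto
  then show ?case by simp
next
  case (Suc k)
  have "(\<Sum>es\<in>{xs. set xs \<subseteq> A \<and> length xs = Suc k}. prod_list (map g es))
      = (\<Sum>es\<in>(\<lambda>(xs, n). n#xs) ` ({xs. set xs \<subseteq> A \<and> length xs = k} \<times> A). prod_list (map g es))"
    by (simp only: lists_length_Suc_eq)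
  also have "\<dots> = (\<Sum>(xs, a)\<in>{xs. set xs \<subseteq> A \<and> length xs = k} \<times> A. g a * prod_list (map g xs))"
    by (subst sum.reindex[OF inj_split_Cons]) (simp add: case_prod_beta)
  also have "\<dots> = (\<Sum>xs\<in>{xs. set xs \<subseteq> A \<and> length xs = k}. \<Sum>a\<in>A. g a * prod_list (map g xs))"
    by (simp only: sum.cartesian_product)
  also have "\<dots> = (\<Sum>xs\<in>{xs. set xs \<subseteq> A \<and> length xs = k}. prod_list (map g xs)) * (\<Sum>a\<in>A. g a)"
    by (simp add: sum_distrib_right sum_distrib_left mult.commute)
  also have "\<dots> = (\<Sum>a\<in>A. g a)^Suc k" using Suc by (simp add: mult.commute)
  finally show ?case .
qed

lemma sum_lists_le:
  fixes h :: "'a list \<Rightarrow> real"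
  assumes "finite A"
  shows "(\<Sum>es\<in>{xs. set xs \<subseteq> A \<and> length xs \<le> K}. h es) = (\<Sum>k\<le>K. \<Sum>es\<in>{xs. set xs \<subseteq> A \<and> length xs = k}. h es)"
proof (induction K)
  case 0
  have "{xs. set xs \<subseteq> A \<and> length xs \<le> 0} = {xs. set xs \<subseteq> A \<and> length xs = 0}" by auto
  then show ?case by simp
next
  case (Suc K)
  have "{xs. set xs \<subseteq> A \<and> length xs \<le> Suc K} = {xs. set xs \<subseteq> A \<and> length xs \<le> K} \<union> {xs. set xs \<subseteq> A \<and> length xs = Suc K}"
    by auto
  then have "(\<Sum>es\<in>{xs. set xs \<subseteq> A \<and> length xs \<le> Suc K}. h es)
     = (\<Sum>es\<in>{xs. set xs \<subseteq> A \<and> length xs \<le> K}. h es) + (\<Sum>es\<in>{xs. set xs \<subseteq> A \<and> length xs = Suc K}. h es)"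
    using assms by (simp add: sum.union_disjoint finite_lists_length_le finite_lists_length_eq disjoint_iff)
  then show ?case using Suc by simp
qed

lemma prod_list_nonneg':
  fixes g :: "'a \<Rightarrow> real"
  assumes "\<And>a. g a \<ge> 0" shows "prod_list (map g es) \<ge> 0"
  by (induction es) (auto simp: assms)

lemma lists_summable:
  fixes g :: "'a \<Rightarrow> real"
  assumes A: "finite A" and g: "\<And>a. g a \<ge> 0" and q: "(\<Sum>a\<in>A. g a) < 1"
  shows "(\<lambda>es. prod_list (map g es)) summable_on {es. set es \<subseteq> A}"
proof (rule nonneg_bdd_above_summable_on)
  show "\<And>x. x \<in> {es. set es \<subseteq> A} \<Longrightarrow> 0 \<le> prod_list (map g x)" using prod_list_nonneg'[of g, OF g] by blast
  define Q where "Q = (\<Sum>a\<in>A. g a)"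
  have Q0: "Q \<ge> 0" using g by (simp add: Q_def sum_nonneg)
  show "bdd_above (sum (\<lambda>es. prod_list (map g es)) ` {F. F \<subseteq> {es. set es \<subseteq> A} \<and> finite F})"
  proof (rule bdd_aboveI[of _ "1 / (1 - Q)"])
    fix y assume "y \<in> sum (\<lambda>es. prod_list (map g es)) ` {F. F \<subseteq> {es. set es \<subseteq> A} \<and> finite F}"
    then obtain F where F: "finite F" "F \<subseteq> {es. set es \<subseteq> A}" and y: "y = (\<Sum>es\<in>F. prod_list (map g es))" by blast
    define K where "K = Max (length ` F)"
    have sub: "F \<subseteq> {xs. set xs \<subseteq> A \<and> length xs \<le> K}"
      using F by (auto simp: K_def)
    have "y \<le> (\<Sum>es\<in>{xs. set xs \<subseteq> A \<and> length xs \<le> K}. prod_list (map g es))"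
      unfolding y using sub prod_list_nonneg'[of g, OF g] by (intro sum_mono2 finite_lists_length_le A) auto
    also have "\<dots> = (\<Sum>k\<le>K. Q^k)" by (simp add: sum_lists_le[OF A] sum_lists_prod[OF A] Q_def)
    also have "\<dots> = (\<Sum>k<Suc K. Q^k)" by (simp add: lessThan_Suc_atMost)
    also have "\<dots> = (1 - Q^Suc K) / (1 - Q)"
    proof -
      have "Q \<noteq> 1" using q by (simp add: Q_def)
      then show ?thesis by (simp only: sum_gp_strict if_False)
    qed
    also have "\<dots> \<le> 1 / (1 - Q)" using q Q0 by (intro divide_right_mono) (auto simp: Q_def)
    finally show "y \<le> 1 / (1 - Q)" .
  qed
qed

lemma cmod_prod_list: "(cmod (prod_list (map g es)))\<^sup>2 = prod_list (map (\<lambda>e. (cmod (g e))\<^sup>2) es)"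
  by (induction es) (auto simp: norm_mult power_mult_distrib)


locale gxl = gx V E r s x n ee for V :: "'v set" and E :: "'e set" and r s :: "'e \<Rightarrow> 'v"
    and x :: 'v and n :: nat and ee :: "nat \<Rightarrow> 'e" +
  fixes lam :: "nat \<Rightarrow> complex"
  assumes lam_lt: "(\<Sum>i<n. (cmod (lam i))\<^sup>2) < 1"
begin

abbreviation "Lx \<equiv> {e \<in> E. s e = x \<and> r e = x}"
definition "mu e = lam (inv_into {..<n} ee e)"
abbreviation "Ls \<equiv> {es. set es \<subseteq> Lx}"
definition emb :: "'e list \<Rightarrow> ('v,'e) gpath" where "emb es = (if es = [] then Vtx x else Edges es)"
definition "pl es = prod_list (map mu es)"
definition chi :: "('v,'e) vec \<Rightarrow> complex" where "chi f = infsum (\<lambda>es. pl es * f (emb es)) Ls"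

lemma Lx_finite: "finite Lx"
  using bij_betw_finite[OF bij] by simp

lemma mu_ee: "i < n \<Longrightarrow> mu (ee i) = lam i"
  using bij by (simp add: mu_def bij_betw_def inv_into_f_f)

lemma q_lt: "(\<Sum>e\<in>Lx. (cmod (mu e))\<^sup>2) < 1"
proof -
  have "(\<Sum>e\<in>Lx. (cmod (mu e))\<^sup>2) = (\<Sum>i<n. (cmod (mu (ee i)))\<^sup>2)"
    by (rule sum.reindex_bij_betw[OF bij, symmetric])
  also have "\<dots> = (\<Sum>i<n. (cmod (lam i))\<^sup>2)" by (simp add: mu_ee)
  finally show ?thesis using lam_lt by simp
qed

lemma pl_summable: "(\<lambda>es. (cmod (pl es))\<^sup>2) summable_on Ls"
  using lists_summable[OF Lx_finite _ q_lt] unfolding pl_def cmod_prod_list by simp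

lemma emb_inj: "inj emb"
  by (rule injI) (auto simp: emb_def split: if_splits)

lemma emb_vp: "es \<in> Ls \<Longrightarrow> vp (emb es)"
proof -
  assume es: "es \<in> Ls"
  show "vp (emb es)"
  proof (cases "es = []")
    case True then show ?thesis using xV by (simp add: emb_def valid_path_def)
  next
    case False
    have "s (es ! i) = r (es ! Suc i)" if "Suc i < length es" for i
    proof -
      have "es ! i \<in> set es" "es ! Suc i \<in> set es" using that by (auto intro: nth_mem)
      then have "es ! i \<in> Lx" "es ! Suc i \<in> Lx" using es by auto
      then show ?thesis by simp
    qed
    then show ?thesis using es False by (auto simp: emb_def valid_path_def)
  qed
qed

lemma emb_range: "es \<in> Ls \<Longrightarrow> prange r (emb es) = x"
  by (cases es) (auto simp: emb_def)

lemma f_emb_summable: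
  assumes f: "f \<in> H"
  shows "(\<lambda>es. (cmod (f (emb es)))\<^sup>2) summable_on Ls"
    "infsum (\<lambda>es. (cmod (f (emb es)))\<^sup>2) Ls \<le> (l2norm f)\<^sup>2"
proof -
  have s: "(\<lambda>u. (cmod (f u))\<^sup>2) summable_on UNIV" using H_sqs[OF f] by (simp add: sqs_def)
  have s2: "(\<lambda>u. (cmod (f u))\<^sup>2) summable_on (emb ` Ls)"
    by (rule summable_on_subset_banach[OF s]) simp
  have inj: "inj_on emb Ls" using emb_inj by (simp add: inj_on_def inj_def)
  show s3: "(\<lambda>es. (cmod (f (emb es)))\<^sup>2) summable_on Ls"
    using summable_on_reindex[OF inj, of "\<lambda>u. (cmod (f u))\<^sup>2", THEN iffD1, OF s2] by (simp add: comp_def)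
  have "infsum (\<lambda>es. (cmod (f (emb es)))\<^sup>2) Ls = infsum (\<lambda>u. (cmod (f u))\<^sup>2) (emb ` Ls)"
    using infsum_reindex[OF inj, of "\<lambda>u. (cmod (f u))\<^sup>2"] by (simp add: comp_def)
  also have "\<dots> \<le> infsum (\<lambda>u. (cmod (f u))\<^sup>2) UNIV"
    by (rule infsum_mono_neutral[OF s2 s]) auto
  also have "\<dots> = (l2norm f)\<^sup>2" by (simp add: l2norm_sq)
  finally show "infsum (\<lambda>es. (cmod (f (emb es)))\<^sup>2) Ls \<le> (l2norm f)\<^sup>2" .
qed

lemma amgm: "(a::real) * b \<le> (a\<^sup>2 + b\<^sup>2) / 2"
proof -
  have "0 \<le> (a - b)\<^sup>2" by simp
  then show ?thesis by (simp add: power2_diff)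
qed

lemma chi_abs:
  assumes f: "f \<in> H"
  shows "(\<lambda>es. cmod (pl es * f (emb es))) summable_on Ls"
    "(\<lambda>es. pl es * f (emb es)) summable_on Ls"
    "cmod (chi f) \<le> (infsum (\<lambda>es. (cmod (pl es))\<^sup>2) Ls + (l2norm f)\<^sup>2) / 2"
proof -
  have s0: "(\<lambda>es. (cmod (pl es))\<^sup>2 + (cmod (f (emb es)))\<^sup>2) summable_on Ls"
    by (rule summable_on_add[OF pl_summable f_emb_summable(1)[OF f]])
  have s1: "(\<lambda>es. (1/2) * ((cmod (pl es))\<^sup>2 + (cmod (f (emb es)))\<^sup>2)) summable_on Ls"
    by (rule summable_on_cmult_right[OF s0])
  have le: "cmod (pl es * f (emb es)) \<le> (1/2) * ((cmod (pl es))\<^sup>2 + (cmod (f (emb es)))\<^sup>2)" for es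
    using amgm[of "cmod (pl es)" "cmod (f (emb es))"] by (simp add: norm_mult)
  show a: "(\<lambda>es. cmod (pl es * f (emb es))) summable_on Ls"
    by (rule summable_on_comparison_test[OF s1 le norm_ge_zero])
  show b: "(\<lambda>es. pl es * f (emb es)) summable_on Ls"
    by (rule abs_summable_summable[OF a])
  have "cmod (chi f) \<le> infsum (\<lambda>es. cmod (pl es * f (emb es))) Ls"
    unfolding chi_def by (rule norm_infsum_bound[OF a])
  also have "\<dots> \<le> infsum (\<lambda>es. (1/2) * ((cmod (pl es))\<^sup>2 + (cmod (f (emb es)))\<^sup>2)) Ls"
    by (rule infsum_mono[OF a s1 le])
  also have "\<dots> = (1/2) * infsum (\<lambda>es. (cmod (pl es))\<^sup>2 + (cmod (f (emb es)))\<^sup>2) Ls"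
    by (rule infsum_cmult_right') 
  also have "\<dots> = (infsum (\<lambda>es. (cmod (pl es))\<^sup>2) Ls + infsum (\<lambda>es. (cmod (f (emb es)))\<^sup>2) Ls) / 2"
    using infsum_add[OF pl_summable f_emb_summable(1)[OF f]] by simp
  also have "\<dots> \<le> (infsum (\<lambda>es. (cmod (pl es))\<^sup>2) Ls + (l2norm f)\<^sup>2) / 2"
    using f_emb_summable(2)[OF f] by simp
  finally show "cmod (chi f) \<le> (infsum (\<lambda>es. (cmod (pl es))\<^sup>2) Ls + (l2norm f)\<^sup>2) / 2" .
qed

lemma chi_add: "f \<in> H \<Longrightarrow> g \<in> H \<Longrightarrow> chi (\<lambda>u. f u + g u) = chi f + chi g"
  unfolding chi_def using infsum_add[OF chi_abs(2) chi_abs(2), of f g]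
  by (simp add: distrib_left)

lemma chi_cmult: "chi (\<lambda>u. c * f u) = c * chi f"
  unfolding chi_def using infsum_cmult_right'[of c "\<lambda>es. pl es * f (emb es)" Ls]
  by (simp add: mult_ac)

lemma chi_minus: "f \<in> H \<Longrightarrow> g \<in> H \<Longrightarrow> chi (\<lambda>u. f u - g u) = chi f - chi g"
  using chi_add[of f "\<lambda>u. (-1) * g u"] H_cmult[of g "-1"] chi_cmult[of "-1" g] by simp

definition "KK = (infsum (\<lambda>es. (cmod (pl es))\<^sup>2) Ls + 1) / 2"

lemma KK_nonneg: "KK \<ge> 0"
  unfolding KK_def using infsum_nonneg[of Ls "\<lambda>es. (cmod (pl es))\<^sup>2"] by simp

lemma chi_bound: assumes f: "f \<in> H" shows "cmod (chi f) \<le> KK * l2norm f"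
proof (cases "l2norm f = 0")
  case True
  then have "f = (\<lambda>u. 0)" using l2norm_eq0[OF H_sqs[OF f]] by simp
  then show ?thesis by (simp add: chi_def l2norm_zero)
next
  case False
  then have pos: "l2norm f > 0" using l2norm_nonneg[of f] by simp
  define g where "g = (\<lambda>u. complex_of_real (1 / l2norm f) * f u)"
  have g: "g \<in> H" unfolding g_def by (rule H_cmult[OF f])
  have ng: "l2norm g = 1" unfolding g_def l2norm_cmult using pos by (simp add: norm_divide)
  have fg: "f = (\<lambda>u. complex_of_real (l2norm f) * g u)" using pos by (simp add: g_def)
  have "chi f = complex_of_real (l2norm f) * chi g" by (subst fg) (rule chi_cmult)
  then have "cmod (chi f) = l2norm f * cmod (chi g)" using pos by (simp add: norm_mult)
  also have "\<dots> \<le> l2norm f * KK"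
    using chi_abs(3)[OF g] ng pos by (intro mult_left_mono) (auto simp: KK_def)
  finally show ?thesis by (simp add: mult.commute)
qed

lemma chi_L:
  assumes e: "e \<in> E" and f: "f \<in> H"
  shows "chi (L e f) = (if s e = x \<and> r e = x then mu e else 0) * chi f"
proof (cases "s e = x \<and> r e = x")
  case True
  have Lv: "L e f (emb es) = (case es of [] \<Rightarrow> 0 | e' # rest \<Rightarrow> if e' = e then f (emb rest) else 0)"
    if "es \<in> Ls" for es
  proof (cases es)
    case Nil then show ?thesis using f by (simp add: L_apply' emb_def)
  next
    case (Cons e' rest)
    have "vp (emb es)" using emb_vp[OF that] .
    then show ?thesis using f Cons True by (simp add: L_apply' emb_def tailp_def)
  qed
  have "chi (L e f) = infsum (\<lambda>es. pl es * L e f (emb es)) ((#) e ` Ls)"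
    unfolding chi_def
  proof (rule infsum_cong_neutral)
    fix es assume "es \<in> Ls - (#) e ` Ls"
    then show "pl es * L e f (emb es) = 0" using Lv by (auto split: list.splits)
  next
    fix es assume "es \<in> (#) e ` Ls - Ls"
    then show "pl es * L e f (emb es) = 0" using True e by auto
  qed simp
  also have "\<dots> = infsum (\<lambda>rest. mu e * (pl rest * f (emb rest))) Ls"
  proof (subst infsum_reindex)
    show "inj_on ((#) e) Ls" by simp
    show "infsum ((\<lambda>es. pl es * L e f (emb es)) \<circ> (#) e) Ls = infsum (\<lambda>rest. mu e * (pl rest * f (emb rest))) Ls"
    proof (rule infsum_cong)
      fix rest assume "rest \<in> Ls"
      then have "e # rest \<in> Ls" using True e by auto
      then show "((\<lambda>es. pl es * L e f (emb es)) \<circ> (#) e) rest = mu e * (pl rest * f (emb rest))"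
        using Lv by (simp add: pl_def)
    qed
  qed
  also have "\<dots> = mu e * chi f" unfolding chi_def by (rule infsum_cmult_right')
  finally show ?thesis using True by simp
next
  case False
  have "pl es * L e f (emb es) = 0" if "es \<in> Ls" for es
  proof (cases es)
    case Nil then show ?thesis using f by (simp add: L_apply' emb_def)
  next
    case (Cons e' rest)
    then have "e' \<noteq> e" using that False by auto
    then show ?thesis using f Cons by (simp add: L_apply' emb_def)
  qed
  then have "chi (L e f) = 0" unfolding chi_def by (rule infsum_0)
  moreover have "(if s e = x \<and> r e = x then mu e else 0) = 0" using False by auto
  ultimately show ?thesis by simp
qed

lemma chi_P:
  assumes f: "f \<in> H"
  shows "chi (P v f) = (if v = x then 1 else 0) * chi f"
proof -
  have "pl es * P v f (emb es) = (if v = x then 1 else 0) * (pl es * f (emb es))" if "es \<in> Ls" for es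
    using f emb_vp[OF that] emb_range[OF that] by (simp add: P_apply)
  then have "chi (P v f) = infsum (\<lambda>es. (if v = x then 1 else 0) * (pl es * f (emb es))) Ls"
    unfolding chi_def by (rule infsum_cong)
  also have "\<dots> = (if v = x then 1 else 0) * chi f" unfolding chi_def by (rule infsum_cmult_right')
  finally show ?thesis .
qed

definition xi :: "('v,'e) vec" where "xi = (\<lambda>u. if u = Vtx x then (1::complex) else 0)"

lemma xi_H: "xi \<in> H"
proof -
  have fs: "(\<Sum>u\<in>F. (cmod (xi u))\<^sup>2) \<le> 1\<^sup>2" if F: "finite F" for F :: "('v,'e) gpath set"
  proof -
    have "(\<Sum>u\<in>F. (cmod (xi u))\<^sup>2) = (\<Sum>u\<in>F \<inter> {Vtx x}. (cmod (xi u))\<^sup>2)"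
      using F by (intro sum.mono_neutral_right) (auto simp: xi_def)
    also have "\<dots> \<le> 1" by (cases "Vtx x \<in> F") (auto simp: xi_def Int_insert_right)
    finally show ?thesis by simp
  qed
  have "sqs xi" by (rule sqs_bound(1)[of 1]) (use fs in auto)
  moreover have "vp (Vtx x)" using xV by (simp add: valid_path_def)
  ultimately show ?thesis unfolding H_iff xi_def by auto
qed

lemma chi_xi: "chi xi = 1"
proof -
  have "chi xi = infsum (\<lambda>es. pl es * xi (emb es)) {[]}"
    unfolding chi_def by (rule infsum_cong_neutral) (auto simp: xi_def emb_def)
  then show ?thesis by (simp add: pl_def xi_def emb_def)
qed

lemma chi_TP: "p \<in> TP \<Longrightarrow> \<exists>c. \<forall>f\<in>H. chi (p f) = c * chi f"
proof (induction rule: tpoly.induct)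
  case (gen_L e) then show ?case using chi_L by blast
next
  case (gen_P v) then show ?case using chi_P by blast
next
  case (add p q)
  then obtain c d where c: "\<forall>f\<in>H. chi (p f) = c * chi f" and d: "\<forall>f\<in>H. chi (q f) = d * chi f" by blast
  have "chi (\<lambda>u. p f u + q f u) = (c + d) * chi f" if f: "f \<in> H" for f
    using chi_add[OF gop_H[OF gop_TP[OF add.hyps(1)] f] gop_H[OF gop_TP[OF add.hyps(2)] f]] c d f
    by (simp add: distrib_right)
  then show ?case by blast
next
  case (smult p c)
  then obtain d where d: "\<forall>f\<in>H. chi (p f) = d * chi f" by blast
  have "chi (\<lambda>u. c * p f u) = (c * d) * chi f" if f: "f \<in> H" for f
    using chi_cmult[of c "p f"] d f by simp
  then show ?case by blast
next
  case (mult p q)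
  then obtain c d where c: "\<forall>f\<in>H. chi (p f) = c * chi f" and d: "\<forall>f\<in>H. chi (q f) = d * chi f" by blast
  have "chi (p (q f)) = (c * d) * chi f" if f: "f \<in> H" for f
    using c d gop_H[OF gop_TP[OF mult.hyps(2)] f] f by simp
  then show ?case by (auto simp: comp_def)
qed

lemma chi_A:
  assumes T: "T \<in> A" and f: "f \<in> H"
  shows "chi (T f) = chi (T xi) * chi f"
proof -
  have "cmod (chi (T f) - chi (T xi) * chi f) \<le> 0"
  proof (rule le_eps[of "KK * l2norm f + KK * l2norm xi * cmod (chi f)"])
    show "0 \<le> KK * l2norm f + KK * l2norm xi * cmod (chi f)"
      using KK_nonneg l2norm_nonneg[of f] l2norm_nonneg[of xi] by (intro add_nonneg_nonneg mult_nonneg_nonneg) auto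
    fix \<epsilon> :: real assume e: "\<epsilon> > 0"
    obtain p where p: "p \<in> TP" "\<forall>h\<in>H. l2norm (\<lambda>u. T h u - p h u) \<le> \<epsilon> * l2norm h"
      using A_approx[OF T e] by blast
    obtain c where c: "\<forall>h\<in>H. chi (p h) = c * chi h" using chi_TP[OF p(1)] by blast
    have cx: "chi (p xi) = c" using c xi_H chi_xi by simp
    have gp: "gop p" using gop_TP[OF p(1)] .
    have d1: "cmod (chi (T h) - chi (p h)) \<le> KK * (\<epsilon> * l2norm h)" if h: "h \<in> H" for h
    proof -
      have "chi (T h) - chi (p h) = chi (\<lambda>u. T h u - p h u)"
        using chi_minus[OF A_H[OF T h] gop_H[OF gp h]] by simp
      also have "cmod \<dots> \<le> KK * l2norm (\<lambda>u. T h u - p h u)"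
        by (rule chi_bound[OF H_minus[OF A_H[OF T h] gop_H[OF gp h]]])
      finally have "cmod (chi (T h) - chi (p h)) \<le> KK * l2norm (\<lambda>u. T h u - p h u)" .
      also have "\<dots> \<le> KK * (\<epsilon> * l2norm h)" using p(2) h KK_nonneg by (intro mult_left_mono) auto
      finally show ?thesis .
    qed
    have eq: "chi (T f) - chi (T xi) * chi f = (chi (T f) - chi (p f)) - (chi (T xi) - chi (p xi)) * chi f"
      using c f cx by (simp add: algebra_simps)
    have "cmod (chi (T f) - chi (T xi) * chi f) \<le> cmod (chi (T f) - chi (p f)) + cmod (chi (T xi) - chi (p xi)) * cmod (chi f)"
      unfolding eq by (metis norm_triangle_ineq4 norm_mult)
    also have "\<dots> \<le> KK * (\<epsilon> * l2norm f) + KK * (\<epsilon> * l2norm xi) * cmod (chi f)"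
      by (rule add_mono[OF d1[OF f] mult_right_mono[OF d1[OF xi_H] norm_ge_zero]])
    finally show "cmod (chi (T f) - chi (T xi) * chi f) \<le> \<epsilon> * (KK * l2norm f + KK * l2norm xi * cmod (chi f))"
      by (simp add: algebra_simps)
  qed
  then show ?thesis by simp
qed

definition "rho_lam = restrict (\<lambda>T. chi (T xi)) A"

lemma rho_lam_CHx: "rho_lam \<in> CHx"
proof -
  have "rho_lam \<in> CH"
    unfolding CH_iff
  proof (intro conjI ballI allI)
    show "rho_lam \<in> extensional A" by (simp add: rho_lam_def)
  next
    fix S T assume S: "S \<in> A" and T: "T \<in> A"
    show "rho_lam (\<lambda>f u. S f u + T f u) = rho_lam S + rho_lam T"
      using A_add[OF S T] S T chi_add[OF A_H[OF S xi_H] A_H[OF T xi_H]] by (simp add: rho_lam_def)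
    show "rho_lam (S \<circ> T) = rho_lam S * rho_lam T"
      using A_comp[OF S T] S T chi_A[OF S A_H[OF T xi_H]] by (simp add: rho_lam_def)
  next
    fix c T assume T: "T \<in> A"
    show "rho_lam (\<lambda>f u. c * T f u) = c * rho_lam T"
      using A_smult[OF T] T chi_cmult by (simp add: rho_lam_def)
  next
    show "\<exists>T\<in>A. rho_lam T \<noteq> 0"
      using P_A[OF xV] chi_P[OF xi_H, of x] chi_xi by (intro bexI[of _ "P x"]) (auto simp: rho_lam_def)
  qed
  moreover have "rho_lam (P x) = 1"
    using P_A[OF xV] chi_P[OF xi_H, of x] chi_xi by (simp add: rho_lam_def)
  ultimately show ?thesis by (simp add: CHx_iff)
qed

lemma rho_lam_L: "i < n \<Longrightarrow> rho_lam (L (ee i)) = lam i"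
  using L_A[OF ee_E(1)] chi_L[OF ee_E(1) xi_H] ee_E chi_xi mu_ee by (simp add: rho_lam_def)

end


lemma cmap_mult:
  fixes f g :: "'a \<Rightarrow> complex"
  shows "continuous_map X euclidean f \<Longrightarrow> continuous_map X euclidean g \<Longrightarrow> continuous_map X euclidean (\<lambda>x. f x * g x)"
  by (simp add: continuous_map_atin tendsto_mult)

lemma closedin_eqs:
  fixes f g :: "'i \<Rightarrow> 'a \<Rightarrow> complex"
  assumes "\<And>i. i \<in> I \<Longrightarrow> continuous_map X euclidean (f i)" "\<And>i. i \<in> I \<Longrightarrow> continuous_map X euclidean (g i)"
  shows "closedin X {y \<in> topspace X. \<forall>i\<in>I. f i y = g i y}"
proof (cases "I = {}")
  case True then show ?thesis by simp
next
  case False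
  have "{y \<in> topspace X. \<forall>i\<in>I. f i y = g i y} = \<Inter> ((\<lambda>i. {y \<in> topspace X. f i y = g i y}) ` I)"
    using False by auto
  also have "closedin X \<dots>"
    using False assms by (intro closedin_Inter) (auto intro!: closedin_continuous_maps_eq[OF Hausdorff_space_euclidean])
  finally show ?thesis .
qed

context gx begin

abbreviation "PT \<equiv> product_topology (\<lambda>_. euclidean) A :: (('v,'e) op \<Rightarrow> complex) topology"

lemma proj_cont: "T \<in> A \<Longrightarrow> continuous_map PT euclidean (\<lambda>\<rho>. \<rho> T)"
  using continuous_map_product_projection[of T A "\<lambda>_. euclidean"] by simp

lemma topspace_PT: "topspace PT = extensional A"
  by (simp add: PiE_def)

lemma CHx_closed: "closedin PT CHx"
proof -
  define C1 where "C1 = {\<rho> \<in> topspace PT. \<forall>i\<in>A \<times> A. (\<lambda>\<rho>. \<rho> (\<lambda>f u. fst i f u + snd i f u)) \<rho> = (\<lambda>\<rho>. \<rho> (fst i) + \<rho> (snd i)) \<rho>}"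
  define C2 where "C2 = {\<rho> \<in> topspace PT. \<forall>i\<in>UNIV \<times> A. (\<lambda>\<rho>. \<rho> (\<lambda>f u. fst i * snd i f u)) \<rho> = (\<lambda>\<rho>. fst i * \<rho> (snd i)) \<rho>}"
  define C3 where "C3 = {\<rho> \<in> topspace PT. \<forall>i\<in>A \<times> A. (\<lambda>\<rho>. \<rho> (fst i \<circ> snd i)) \<rho> = (\<lambda>\<rho>. \<rho> (fst i) * \<rho> (snd i)) \<rho>}"
  define C4 where "C4 = {\<rho> \<in> topspace PT. \<forall>i\<in>{P x}. (\<lambda>\<rho>. \<rho> i) \<rho> = (\<lambda>\<rho>. 1) \<rho>}"
  have c1: "closedin PT C1" unfolding C1_def
    by (rule closedin_eqs) (auto intro!: proj_cont A_add continuous_map_add)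
  have c2: "closedin PT C2" unfolding C2_def
    by (rule closedin_eqs) (auto intro!: proj_cont A_smult cmap_mult)
  have c3: "closedin PT C3" unfolding C3_def
    by (rule closedin_eqs) (auto intro!: proj_cont A_comp cmap_mult)
  have c4: "closedin PT C4" unfolding C4_def
    by (rule closedin_eqs) (auto intro!: proj_cont P_A xV)
  have "CHx = C1 \<inter> C2 \<inter> C3 \<inter> C4"
  proof
    show "CHx \<subseteq> C1 \<inter> C2 \<inter> C3 \<inter> C4"
      unfolding C1_def C2_def C3_def C4_def topspace_PT
      by (auto simp: CHx_iff CH_iff)
    show "C1 \<inter> C2 \<inter> C3 \<inter> C4 \<subseteq> CHx"
    proof
      fix \<rho> assume h: "\<rho> \<in> C1 \<inter> C2 \<inter> C3 \<inter> C4"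
      have "\<rho> (P x) = 1" using h by (simp add: C4_def)
      moreover have "\<exists>T\<in>A. \<rho> T \<noteq> 0" using P_A[OF xV] calculation by force
      ultimately show "\<rho> \<in> CHx" using h unfolding C1_def C2_def C3_def C4_def topspace_PT
        by (auto simp: CHx_iff CH_iff)
    qed
  qed
  then show ?thesis using c1 c2 c3 c4 by (simp add: closedin_Int)
qed

definition "bnd T = (SOME C. C \<ge> 0 \<and> (\<forall>f\<in>H. l2norm (T f) \<le> C * l2norm f))"

lemma bnd: "T \<in> A \<Longrightarrow> bnd T \<ge> 0 \<and> (\<forall>f\<in>H. l2norm (T f) \<le> bnd T * l2norm f)"
  unfolding bnd_def by (rule someI_ex) (rule A_bound)

lemma CHx_compact: "compactin PT CHx"
proof (rule closed_compactin[OF _ _ CHx_closed])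
  show "compactin PT (PiE A (\<lambda>T. cball 0 (bnd T)))"
    by (simp add: compactin_PiE)
  show "CHx \<subseteq> PiE A (\<lambda>T. cball 0 (bnd T))"
  proof
    fix \<rho> assume h: "\<rho> \<in> CHx"
    then have r: "\<rho> \<in> CH" by (simp add: CHx_iff)
    have "cmod (\<rho> T) \<le> bnd T" if "T \<in> A" for T
      using ch_bound[OF r that] bnd[OF that] by blast
    then show "\<rho> \<in> PiE A (\<lambda>T. cball 0 (bnd T))"
      using ch_ext[OF r] by (auto simp: PiE_iff)
  qed
qed

abbreviation "phi \<equiv> (\<lambda>\<rho>. \<lambda>i\<in>{..<n}. \<rho> (L (ee i)))"
abbreviation "PY \<equiv> product_topology (\<lambda>_. euclidean) {..<n} :: (nat \<Rightarrow> complex) topology"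

lemma topX: "topspace (weak_star_topology V E r s x) = CHx"
proof -
  have "CHx \<subseteq> topspace PT" using topspace_PT ch_ext by (auto simp: CHx_iff)
  then show ?thesis by (simp add: weak_star_topology_def Int_absorb1)
qed

lemma ballsub: "closed_unit_ball_n n \<subseteq> topspace PY"
  by (auto simp: closed_unit_ball_n_def)

lemma topY: "topspace (ball_topology n) = closed_unit_ball_n n"
  using ballsub by (simp add: ball_topology_def Int_absorb1)

lemma phi_in: "\<rho> \<in> CHx \<Longrightarrow> phi \<rho> \<in> closed_unit_ball_n n"
  using chx_ball[of \<rho>] by (simp add: closed_unit_ball_n_def)

lemma phi_cont: "continuous_map (weak_star_topology V E r s x) (ball_topology n) phi"
  unfolding ball_topology_def
proof (rule continuous_map_into_subtopology)
  show "phi \<in> topspace (weak_star_topology V E r s x) \<rightarrow> closed_unit_ball_n n"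
    using phi_in topX by auto
  have ext: "phi ` topspace (weak_star_topology V E r s x) \<subseteq> extensional {..<n}" by auto
  have comp: "continuous_map (weak_star_topology V E r s x) euclidean (\<lambda>\<rho>. phi \<rho> k)" if k: "k \<in> {..<n}" for k
  proof -
    have "continuous_map (weak_star_topology V E r s x) euclidean (\<lambda>\<rho>. \<rho> (L (ee k)))"
      unfolding weak_star_topology_def
      by (rule continuous_map_from_subtopology[OF proj_cont[OF L_A[OF ee_E(1)]]]) (use k in simp)
    then show "continuous_map (weak_star_topology V E r s x) euclidean (\<lambda>\<rho>. phi \<rho> k)"
      using k by simp
  qed
  show "continuous_map (weak_star_topology V E r s x) PY phi"
    unfolding continuous_map_componentwise using ext comp by blast
qed

lemma interior_hit:
  assumes z: "z \<in> extensional {..<n}" "(\<Sum>i<n. (cmod (z i))\<^sup>2) < 1"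
  shows "z \<in> phi ` CHx"
proof -
  interpret l: gxl V E r s x n ee z
    by unfold_locales (use edges_in xV bij z(2) in auto)
  have "phi l.rho_lam = z"
    using l.rho_lam_L z(1) by (auto simp: extensional_def)
  then show ?thesis using l.rho_lam_CHx by (intro image_eqI[OF sym])
qed

theorem main_homeo: "homeomorphic_map (weak_star_topology V E r s x) (ball_topology n) phi"
proof (rule continuous_imp_homeomorphic_map)
  show "continuous_map (weak_star_topology V E r s x) (ball_topology n) phi" by (rule phi_cont)
  show "compact_space (weak_star_topology V E r s x)"
    unfolding weak_star_topology_def by (rule compact_space_subtopology[OF CHx_compact])
  show "Hausdorff_space (ball_topology n)"
    unfolding ball_topology_def
    by (intro Hausdorff_space_subtopology) (simp add: Hausdorff_space_product_topology)
  show "inj_on phi (topspace (weak_star_topology V E r s x))"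
    unfolding topX
  proof (rule inj_onI)
    fix \<rho> \<sigma> assume h: "\<rho> \<in> CHx" "\<sigma> \<in> CHx" "phi \<rho> = phi \<sigma>"
    have "\<rho> (L (ee i)) = \<sigma> (L (ee i))" if "i < n" for i
      using fun_cong[OF h(3), of i] that by simp
    then show "\<rho> = \<sigma>" by (rule chx_unique[OF h(1,2)])
  qed
  show "phi ` topspace (weak_star_topology V E r s x) = topspace (ball_topology n)"
    unfolding topX topY
  proof
    show "phi ` CHx \<subseteq> closed_unit_ball_n n" using phi_in by auto
    show "closed_unit_ball_n n \<subseteq> phi ` CHx"
    proof
      fix z assume z: "z \<in> closed_unit_ball_n n"
      have ze: "z \<in> extensional {..<n}" and zs: "(\<Sum>i<n. (cmod (z i))\<^sup>2) \<le> 1"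
        using z by (auto simp: closed_unit_ball_n_def PiE_iff)
      have cpt: "compactin (ball_topology n) (phi ` CHx)"
        using image_compactin[OF _ phi_cont, of CHx] CHx_compact
        by (simp add: weak_star_topology_def compactin_subtopology)
      have cl: "closedin (ball_topology n) (phi ` CHx)"
        by (rule compactin_imp_closedin[OF _ cpt])
          (simp add: ball_topology_def Hausdorff_space_subtopology Hausdorff_space_product_topology)
      define t where "t k = 1 - 1 / (real k + 2)" for k
      have t0: "0 \<le> t k" "t k < 1" for k by (auto simp: t_def field_simps)
      define zk where "zk k = (\<lambda>i\<in>{..<n}. complex_of_real (t k) * z i)" for k
      have zk_in: "zk k \<in> phi ` CHx" for k
      proof (rule interior_hit)
        show "zk k \<in> extensional {..<n}" by (simp add: zk_def)
        have "(\<Sum>i<n. (cmod (zk k i))\<^sup>2) = (t k)\<^sup>2 * (\<Sum>i<n. (cmod (z i))\<^sup>2)"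
          using t0[of k] by (simp add: zk_def norm_mult power_mult_distrib sum_distrib_left)
        also have "\<dots> \<le> (t k)\<^sup>2 * 1" using zs by (intro mult_left_mono) auto
        also have "\<dots> < 1" using t0[of k] by (simp add: power_less_one_iff abs_if)
        finally show "(\<Sum>i<n. (cmod (zk k i))\<^sup>2) < 1" .
      qed
      have tlim: "(\<lambda>k. t k) \<longlonglongrightarrow> 1"
      proof -
        have "(\<lambda>k. 1 / (real k + 2)) \<longlonglongrightarrow> 0"
          by real_asymp
        then have "(\<lambda>k. 1 - 1 / (real k + 2)) \<longlonglongrightarrow> 1 - 0" by (intro tendsto_diff tendsto_const)
        then show ?thesis by (simp add: t_def)
      qed
      have lim: "limitin (ball_topology n) zk z sequentially"
        unfolding ball_topology_def limitin_subtopology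
      proof (intro conjI)
        show "z \<in> closed_unit_ball_n n" by (rule z)
        show "\<forall>\<^sub>F k in sequentially. zk k \<in> closed_unit_ball_n n"
        proof (intro always_eventually allI)
          fix k
          obtain \<rho> where "\<rho> \<in> CHx" "zk k = phi \<rho>" using zk_in[of k] by blast
          then show "zk k \<in> closed_unit_ball_n n" using phi_in by simp
        qed
        show "limitin PY zk z sequentially"
          unfolding limitin_componentwise
        proof (intro conjI ballI)
          show "z \<in> extensional {..<n}" by (rule ze)
          show "\<forall>\<^sub>F k in sequentially. zk k \<in> topspace PY" by (simp add: zk_def)
          fix i assume i: "i \<in> {..<n}"
          have "(\<lambda>k. complex_of_real (t k) * z i) \<longlonglongrightarrow> complex_of_real 1 * z i"
            by (intro tendsto_intros tlim)
          then show "limitin euclidean (\<lambda>k. zk k i) (z i) sequentially"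
            using i by (simp add: zk_def)
        qed
      qed
      show "z \<in> phi ` CHx"
        by (rule limitin_closedin[OF lim cl]) (auto simp: zk_in)
    qed
  qed
qed

end

theorem proposition2p1:
  fixes V :: "'v set" and E :: "'e set" and r s :: "'e \<Rightarrow> 'v"
    and x :: 'v and n :: nat and ee :: "nat \<Rightarrow> 'e"
  assumes "countable_digraph V E r s"
    and "x \<in> V"
    and "bij_betw ee {..<n} {e \<in> E. s e = x \<and> r e = x}"
  shows "homeomorphic_map (weak_star_topology V E r s x) (ball_topology n)
           (\<lambda>\<rho>. \<lambda>i\<in>{..<n}. \<rho> (shiftL V E r s (ee i)))"
proof -
  interpret gx V E r s x n ee
    using assms by unfold_locales (auto simp: countable_digraph_def)
  show ?thesis by (rule main_homeo)
qed

end
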